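(* Thompson's groups $F$, $T$ and $V$ are intersection-saturated.
   Context: For an integer $n\geq 1$ write $[n]=\{1,\dots,n\}$. An $n$-configuration is a map $c\colon \mathcal{P}([n])\setminus\{\emptyset\}\to\{0,1\}$. An $n$-configuration $c$ is realisable in a group $G$ if there exist subgroups $H_1,\dots,H_n\leq G$ such that for every non-empty subset $I\subseteq[n]$, the subgroup $\bigcap_{i\in I}H_i$ is finitely generated if and only if $c(I)=0$. A group $G$ is intersection-saturated if for every $n\geq 1$, every $n$-configuration is realisable in $G$. *)

theory Defs
  imports "HOL-Analysis.Analysis" "HOL-Algebra.Algebra"
begin

definition fin_gen_subgroup :: "('a, 'b) monoid_scheme \<Rightarrow> 'a set \<Rightarrow> bool" where
  "fin_gen_subgroup G H \<longleftrightarrow> (\<exists>S. finite S \<and> S \<subseteq> carrier G \<and> H = generate G S)"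

text \<open>An n-configuration is a map from the nonempty subsets of {1..n} to {0,1};
  we represent it as a function on all sets of naturals, only its values on
  nonempty subsets of {1..n} being relevant.\<close>
definition configuration :: "nat \<Rightarrow> (nat set \<Rightarrow> nat) \<Rightarrow> bool" where
  "configuration n c \<longleftrightarrow> (\<forall>I. I \<noteq> {} \<and> I \<subseteq> {1..n} \<longrightarrow> c I \<in> {0, 1})"

definition realisable :: "('a, 'b) monoid_scheme \<Rightarrow> nat \<Rightarrow> (nat set \<Rightarrow> nat) \<Rightarrow> bool" where
  "realisable G n c \<longleftrightarrow>
     (\<exists>H :: nat \<Rightarrow> 'a set. (\<forall>i \<in> {1..n}. subgroup (H i) G) \<and>
        (\<forall>I. I \<noteq> {} \<and> I \<subseteq> {1..n} \<longrightarrow>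
             (fin_gen_subgroup G (\<Inter>i\<in>I. H i) \<longleftrightarrow> c I = 0)))"

definition intersection_saturated :: "('a, 'b) monoid_scheme \<Rightarrow> bool" where
  "intersection_saturated G \<longleftrightarrow>
     (\<forall>n \<ge> 1. \<forall>c. configuration n c \<longrightarrow> realisable G n c)"

definition dyadic :: "real \<Rightarrow> bool" where
  "dyadic x \<longleftrightarrow> (\<exists>(a::int) (k::nat). x = of_int a / 2 ^ k)"

text \<open>V: right-continuous bijections of [0,1) which are piecewise linear with finitely
  many dyadic breakpoints, slopes integral powers of 2, and mapping dyadics to dyadics
  (equivalently, dyadic intercepts). Outside [0,1) the maps are the identity, so that
  composition of functions is the group law.\<close>
definition thompsonV :: "(real \<Rightarrow> real) set" where
  "thompsonV = {f. bij_betw f {0..<1} {0..<1} \<and> (\<forall>x. x \<notin> {0..<1} \<longrightarrow> f x = x) \<and>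
     (\<exists>(n::nat) (a::nat \<Rightarrow> real) (k::nat \<Rightarrow> int) (b::nat \<Rightarrow> real).
        a 0 = 0 \<and> a n = 1 \<and>
        (\<forall>i<n. a i < a (Suc i) \<and> dyadic (a i) \<and> dyadic (b i)) \<and>
        (\<forall>i<n. \<forall>x \<in> {a i..<a (Suc i)}. f x = 2 powr (of_int (k i)) * x + b i))}"

definition thompsonF :: "(real \<Rightarrow> real) set" where
  "thompsonF = {f \<in> thompsonV. strict_mono_on {0..<1} f}"

text \<open>T: the elements inducing orientation-preserving homeomorphisms of the circle
  R/Z = [0,1), i.e. those which become increasing after post-composing with a rotation.\<close>
definition thompsonT :: "(real \<Rightarrow> real) set" where
  "thompsonT = {f \<in> thompsonV. \<exists>t. strict_mono_on {0..<1} (\<lambda>x. frac (f x + t))}"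

definition fun_group :: "(real \<Rightarrow> real) set \<Rightarrow> (real \<Rightarrow> real) monoid" where
  "fun_group S = \<lparr>carrier = S, mult = (\<circ>), one = id\<rparr>"

end

theory Submission
  imports Defs
begin


section \<open>Dyadic numbers\<close>

definition p2 :: "int \<Rightarrow> real" where "p2 k = 2 powr (of_int k)"

lemma p2_pos [simp]: "p2 k > 0" by (simp add: p2_def)
lemma p2_nz [simp]: "p2 k \<noteq> 0" by (simp add: p2_def)
lemma p2_add: "p2 (k + l) = p2 k * p2 l" by (simp add: powr_add p2_def)
lemma p2_minus: "p2 (- k) = 1 / p2 k" by (simp add: powr_minus_divide p2_def)
lemma p2_0 [simp]: "p2 0 = 1" by (simp add: p2_def)
lemma p2_inv: "p2 (- k) * p2 k = 1" by (simp add: p2_minus)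

lemma dyadic_int: "dyadic (of_int a)"
  unfolding dyadic_def by (rule exI[of _ a], rule exI[of _ 0]) simp

lemma dyadic_0: "dyadic 0" using dyadic_int[of 0] by simp
lemma dyadic_1: "dyadic 1" using dyadic_int[of 1] by simp

lemma dyadic_add: assumes "dyadic x" "dyadic y" shows "dyadic (x + y)"
proof -
  obtain a k where x: "x = of_int a / 2 ^ k" using assms(1) unfolding dyadic_def by blast
  obtain c j where y: "y = of_int c / 2 ^ j" using assms(2) unfolding dyadic_def by blast
  have "x + y = of_int (a * 2 ^ j + c * 2 ^ k) / 2 ^ (k + j)"
    unfolding x y by (simp add: field_simps power_add)
  then show ?thesis unfolding dyadic_def by blast
qed

lemma dyadic_minus: assumes "dyadic x" shows "dyadic (- x)"
proof -
  obtain a k where x: "x = of_int a / 2 ^ k" using assms(1) unfolding dyadic_def by blast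
  have "- x = of_int (- a) / 2 ^ k" unfolding x by simp
  then show ?thesis unfolding dyadic_def by blast
qed

lemma dyadic_diff: "dyadic x \<Longrightarrow> dyadic y \<Longrightarrow> dyadic (x - y)"
  using dyadic_add[of x "- y"] dyadic_minus[of y] by simp

lemma dyadic_mult: assumes "dyadic x" "dyadic y" shows "dyadic (x * y)"
proof -
  obtain a k where x: "x = of_int a / 2 ^ k" using assms(1) unfolding dyadic_def by blast
  obtain c j where y: "y = of_int c / 2 ^ j" using assms(2) unfolding dyadic_def by blast
  have "x * y = of_int (a * c) / 2 ^ (k + j)"
    unfolding x y by (simp add: field_simps power_add)
  then show ?thesis unfolding dyadic_def by blast
qed

lemma dyadic_p2: "dyadic (p2 k)"
proof (cases "k \<ge> 0")
  case True
  then have "p2 k = of_int (2 ^ nat k) / 2 ^ 0" by (simp add: powr_int p2_def)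
  then show ?thesis unfolding dyadic_def by blast
next
  case False
  then have "p2 k = of_int 1 / 2 ^ nat (- k)" by (simp add: powr_int p2_def)
  then show ?thesis unfolding dyadic_def by blast
qed

lemma dyadic_affine: "dyadic x \<Longrightarrow> dyadic b \<Longrightarrow> dyadic (p2 k * x + b)"
  by (intro dyadic_add dyadic_mult dyadic_p2)

lemma dyadic_affine_inv:
  assumes "dyadic (p2 k * x + b)" "dyadic b" shows "dyadic x"
proof -
  have "p2 (-k) * p2 k = 1" by (rule p2_inv)
  then have "x = p2 (- k) * (p2 k * x + b) + (- (p2 (-k) * b))"
    by (simp add: algebra_simps)
  then show ?thesis using assms by (metis dyadic_affine dyadic_minus dyadic_mult dyadic_p2)
qed

section \<open>Gap form of PL maps\<close>

definition aff_on :: "(real \<Rightarrow> real) \<Rightarrow> real set \<Rightarrow> bool" where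
  "aff_on f S \<longleftrightarrow> (\<exists>k::int. \<exists>b. dyadic b \<and> (\<forall>x\<in>S. f x = p2 k * x + b))"

definition gap :: "real set \<Rightarrow> real \<Rightarrow> real \<Rightarrow> bool" where
  "gap P p q \<longleftrightarrow> p \<in> P \<and> q \<in> P \<and> p < q \<and> (\<forall>r\<in>P. r \<le> p \<or> q \<le> r)"

definition gapform :: "real set \<Rightarrow> (real \<Rightarrow> real) \<Rightarrow> bool" where
  "gapform P f \<longleftrightarrow> finite P \<and> P \<subseteq> {0..1} \<and> 0 \<in> P \<and> 1 \<in> P \<and> (\<forall>p\<in>P. dyadic p) \<and>
     (\<forall>p q. gap P p q \<longrightarrow> aff_on f {p..<q})"

definition Fset :: "(real \<Rightarrow> real) set" where
  "Fset = {f. bij_betw f {0..<1} {0..<1} \<and> (\<forall>x. x \<notin> {0..<1} \<longrightarrow> f x = x) \<and>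
     strict_mono_on {0..<1} f \<and> (\<exists>P. gapform P f)}"

lemma aff_on_subset: "aff_on f S \<Longrightarrow> T \<subseteq> S \<Longrightarrow> aff_on f T"
  unfolding aff_on_def by blast

lemma gap_exists:
  assumes "finite P" "P \<subseteq> {0..1}" "1 \<in> P" "0 \<in> P" "x \<in> {0..<1}"
  shows "\<exists>p q. gap P p q \<and> p \<le> x \<and> x < q"
proof -
  let ?L = "{r\<in>P. r \<le> x}" and ?U = "{r\<in>P. x < r}"
  have L: "finite ?L" "?L \<noteq> {}" using assms by auto
  have U: "finite ?U" "?U \<noteq> {}" using assms by auto
  define p where "p = Max ?L"
  define q where "q = Min ?U"
  have p: "p \<in> P" "p \<le> x" using Max_in[OF L] unfolding p_def by auto
  have q: "q \<in> P" "x < q" using Min_in[OF U] unfolding q_def by auto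
  have "\<forall>r\<in>P. r \<le> p \<or> q \<le> r"
  proof
    fix r assume r: "r \<in> P"
    show "r \<le> p \<or> q \<le> r"
    proof (cases "r \<le> x")
      case True then show ?thesis using Max_ge[OF L(1)] r unfolding p_def by auto
    next
      case False then show ?thesis using Min_le[OF U(1)] r unfolding q_def by auto
    qed
  qed
  then show ?thesis using p q unfolding gap_def by (intro exI[of _ p] exI[of _ q]) auto
qed

lemma gap_refine:
  assumes "finite P" "P \<subseteq> {0..1}" "1 \<in> P" "0 \<in> P" "P \<subseteq> Q" "Q \<subseteq> {0..1}" "gap Q p q"
  shows "\<exists>p' q'. gap P p' q' \<and> p' \<le> p \<and> q \<le> q'"
proof -
  have "p \<in> {0..<1}" using assms(6,7) unfolding gap_def by force
  then obtain p' q' where g: "gap P p' q'" "p' \<le> p" "p < q'" using gap_exists[OF assms(1-4)] by blast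
  have "q' \<in> Q" using g assms(5) unfolding gap_def by auto
  then have "q \<le> q'" using assms(7) g(3) unfolding gap_def by force
  then show ?thesis using g by blast
qed

lemma gapform_aff_refine:
  assumes "gapform P f" "P \<subseteq> Q" "Q \<subseteq> {0..1}" "gap Q p q"
  shows "aff_on f {p..<q}"
proof -
  obtain p' q' where "gap P p' q'" "p' \<le> p" "q \<le> q'"
    using gap_refine[OF _ _ _ _ assms(2,3,4)] assms(1) unfolding gapform_def by blast
  moreover have "{p..<q} \<subseteq> {p'..<q'}" using \<open>p' \<le> p\<close> \<open>q \<le> q'\<close> by auto
  ultimately show ?thesis using assms(1) unfolding gapform_def
    by (meson aff_on_subset)
qed

lemma gapform_at:
  assumes "gapform P f" "x \<in> {0..<1}"
  shows "\<exists>k b. dyadic b \<and> f x = p2 k * x + b"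
proof -
  obtain p q where "gap P p q" "p \<le> x" "x < q"
    using gap_exists[of P x] assms unfolding gapform_def by blast
  then have "aff_on f {p..<q}" using assms unfolding gapform_def by blast
  then obtain k b where "dyadic b" "\<forall>y\<in>{p..<q}. f y = p2 k * y + b" unfolding aff_on_def by blast
  moreover have "x \<in> {p..<q}" using \<open>p \<le> x\<close> \<open>x < q\<close> by auto
  ultimately show ?thesis by blast
qed

lemma Fset_D:
  assumes "f \<in> Fset"
  shows "bij_betw f {0..<1} {0..<1}" "\<And>x. x \<notin> {0..<1} \<Longrightarrow> f x = x"
    "strict_mono_on {0..<1} f" "\<exists>P. gapform P f"
  using assms unfolding Fset_def by auto

lemma Fset_0:
  assumes "f \<in> Fset" shows "f 0 = 0"
proof -
  have b: "bij_betw f {0..<1} {0..<1}" and m: "strict_mono_on {0..<1} f" using Fset_D[OF assms] by auto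
  obtain y where y: "y \<in> {0..<1}" "f y = 0" using b unfolding bij_betw_def
    by (metis atLeastLessThan_iff image_iff zero_less_one order_refl)
  have "f 0 \<in> {0..<1}" using b unfolding bij_betw_def by auto
  show ?thesis
  proof (cases "y = 0")
    case True then show ?thesis using y by simp
  next
    case False
    then have "0 < y" using y by auto
    have "f 0 < f y" by (rule strict_mono_onD[OF m]) (use y \<open>0 < y\<close> in auto)
    then show ?thesis using y \<open>f 0 \<in> _\<close> by auto
  qed
qed

lemma Fset_strict_mono:
  assumes "f \<in> Fset" "x < y" shows "f x < f y"
proof -
  have b: "bij_betw f {0..<1} {0..<1}" and m: "strict_mono_on {0..<1} f"
    and o: "\<And>x. x \<notin> {0..<1} \<Longrightarrow> f x = x" using Fset_D[OF assms(1)] by auto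
  have im: "\<And>z. z \<in> {0..<1} \<Longrightarrow> f z \<in> {0..<1}" using b unfolding bij_betw_def by auto
  show ?thesis
  proof (cases "x \<in> {0..<1}")
    case xin: True
    show ?thesis
    proof (cases "y \<in> {0..<1}")
      case True then show ?thesis using m xin assms(2) unfolding strict_mono_on_def by auto
    next
      case False then have "y \<ge> 1" using xin assms(2) by auto
      then show ?thesis using o[of y] False im[OF xin] by auto
    qed
  next
    case xout: False
    show ?thesis
    proof (cases "y \<in> {0..<1}")
      case True then have "x < 0" using xout assms(2) by auto
      then show ?thesis using o[of x] xout im[OF True] by auto
    next
      case False then show ?thesis using o xout assms(2) by auto
    qed
  qed
qed

lemma Fset_mono_iff: "f \<in> Fset \<Longrightarrow> f x < f y \<longleftrightarrow> x < y"
  by (metis Fset_strict_mono not_less_iff_gr_or_eq order_less_imp_not_less)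

lemma Fset_le_iff: "f \<in> Fset \<Longrightarrow> f x \<le> f y \<longleftrightarrow> x \<le> y"
  by (meson Fset_mono_iff not_less)

lemma Fset_inj: "f \<in> Fset \<Longrightarrow> inj f"
  by (metis Fset_mono_iff injI not_less_iff_gr_or_eq)

lemma Fset_surj: assumes "f \<in> Fset" shows "surj f"
proof -
  have b: "bij_betw f {0..<1} {0..<1}" and o: "\<And>x. x \<notin> {0..<1} \<Longrightarrow> f x = x"
    using Fset_D[OF assms] by auto
  { fix y :: real
    have "y \<in> range f"
    proof (cases "y \<in> {0..<1}")
      case True then have "y \<in> f ` {0..<1}" using b unfolding bij_betw_def by simp
      then show ?thesis by blast
    next
      case False then show ?thesis using o by (metis rangeI)
    qed }
  then show ?thesis by auto
qed

lemma Fset_bij: "f \<in> Fset \<Longrightarrow> bij f"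
  by (simp add: bij_def Fset_inj Fset_surj)

lemma Fset_1: "f \<in> Fset \<Longrightarrow> f 1 = 1"
  by (rule Fset_D(2)) auto

lemma Fset_maps: assumes "f \<in> Fset" "x \<in> {0..<1}" shows "f x \<in> {0..<1}"
proof -
  have "f x \<in> f ` {0..<1}" using assms(2) by blast
  then show ?thesis using Fset_D(1)[OF assms(1)] unfolding bij_betw_def by simp
qed

lemma Fset_maps_iff: assumes "f \<in> Fset" shows "f x \<in> {0..<1} \<longleftrightarrow> x \<in> {0..<1}"
proof -
  have "f x \<in> {0..<1} \<longleftrightarrow> f 0 \<le> f x \<and> f x < f 1" using Fset_0[OF assms] Fset_1[OF assms] by auto
  also have "\<dots> \<longleftrightarrow> x \<in> {0..<1}" using Fset_le_iff[OF assms] Fset_mono_iff[OF assms] by auto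
  finally show ?thesis .
qed

lemma Fset_maps_closed_iff: assumes "f \<in> Fset" shows "f x \<in> {0..1} \<longleftrightarrow> x \<in> {0..1}"
proof -
  have "f x \<in> {0..1} \<longleftrightarrow> f 0 \<le> f x \<and> f x \<le> f 1" using Fset_0[OF assms] Fset_1[OF assms] by auto
  also have "\<dots> \<longleftrightarrow> x \<in> {0..1}" using Fset_le_iff[OF assms] by auto
  finally show ?thesis .
qed

lemma Fset_id: "id \<in> Fset"
proof -
  have "gapform {0,1} id"
    unfolding gapform_def
  proof (intro conjI allI impI)
    fix p q assume "gap {0,1} p q"
    then have "p = 0" "q = 1" unfolding gap_def by auto
    show "aff_on id {p..<q}" unfolding aff_on_def
      by (rule exI[of _ 0], rule exI[of _ 0]) (simp add: dyadic_0)
  qed (auto simp: dyadic_0 dyadic_1)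
  then show ?thesis unfolding Fset_def by (auto simp: strict_mono_on_def)
qed

lemma Fset_comp:
  assumes f: "f \<in> Fset" and g: "g \<in> Fset"
  shows "f \<circ> g \<in> Fset"
proof -
  obtain Pf where Pf: "gapform Pf f" using Fset_D(4)[OF f] by blast
  obtain Pg where Pg: "gapform Pg g" using Fset_D(4)[OF g] by blast
  define Q where "Q = Pg \<union> {x \<in> {0..1}. g x \<in> Pf}"
  have finQ: "finite Q"
  proof -
    have "{x \<in> {0..1}. g x \<in> Pf} \<subseteq> g -` Pf" by auto
    moreover have "finite (g -` Pf)" using finite_vimageI[OF _ Fset_inj[OF g]] Pf unfolding gapform_def by blast
    ultimately show ?thesis using Pg unfolding Q_def gapform_def by (meson finite_Un finite_subset)
  qed
  have Q01: "Q \<subseteq> {0..1}" using Pg unfolding Q_def gapform_def by auto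
  have PgQ: "Pg \<subseteq> Q" unfolding Q_def by auto
  have Qdy: "\<forall>p\<in>Q. dyadic p"
  proof
    fix x assume "x \<in> Q"
    show "dyadic x"
    proof (cases "x \<in> Pg")
      case True then show ?thesis using Pg unfolding gapform_def by auto
    next
      case False
      then have x: "x \<in> {0..1}" "g x \<in> Pf" using \<open>x \<in> Q\<close> unfolding Q_def by auto
      show ?thesis
      proof (cases "x = 1")
        case True then show ?thesis by (simp add: dyadic_1)
      next
        case False
        then have "x \<in> {0..<1}" using x by auto
        then obtain k b where "dyadic b" "g x = p2 k * x + b" using gapform_at[OF Pg] by blast
        moreover have "dyadic (g x)" using x Pf unfolding gapform_def by auto
        ultimately show ?thesis using dyadic_affine_inv by metis
      qed
    qed
  qed
  have gaps: "aff_on (f \<circ> g) {p..<q}" if gq: "gap Q p q" for p q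
  proof -
    have ag: "aff_on g {p..<q}" using gapform_aff_refine[OF Pg PgQ Q01 gq] .
    then obtain k b where kb: "dyadic b" "\<forall>x\<in>{p..<q}. g x = p2 k * x + b" unfolding aff_on_def by blast
    have pin: "p \<in> {0..<1}" "q \<in> {0..1}" using gq Q01 unfolding gap_def by force+
    then have "g p \<in> {0..<1}" using Fset_maps[OF g] by blast
    then obtain p'' q'' where g2: "gap Pf p'' q''" "p'' \<le> g p" "g p < q''"
      using gap_exists[of Pf "g p"] Pf unfolding gapform_def by blast
    have inside: "g x \<in> {p''..<q''}" if x: "x \<in> {p..<q}" for x
    proof -
      have "g p \<le> g x" using x Fset_le_iff[OF g] by auto
      moreover have "g x < q''"
      proof (rule ccontr)
        assume "\<not> g x < q''"
        then have gxq: "q'' \<le> g x" by simp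
        have "q'' \<in> {0..1}" using g2 Pf unfolding gap_def gapform_def by auto
        then obtain y where y: "g y = q''" using Fset_surj[OF g] by (metis surjD)
        have "y \<in> {0..1}" using Fset_maps_closed_iff[OF g] \<open>q'' \<in> {0..1}\<close> y by auto
        then have "y \<in> Q" using y g2 unfolding Q_def gap_def by auto
        have "p < y" using g2(3) y Fset_mono_iff[OF g] by auto
        moreover have "y \<le> x" using gxq y Fset_le_iff[OF g] by auto
        ultimately show False using gq \<open>y \<in> Q\<close> x unfolding gap_def by force
      qed
      ultimately show ?thesis using g2 by auto
    qed
    have "aff_on f {p''..<q''}" using g2 Pf unfolding gapform_def by blast
    then obtain k' b' where kb': "dyadic b'" "\<forall>x\<in>{p''..<q''}. f x = p2 k' * x + b'" unfolding aff_on_def by blast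
    show ?thesis unfolding aff_on_def
    proof (intro exI conjI ballI)
      show "dyadic (p2 k' * b + b')" using kb kb' by (simp add: dyadic_affine)
      fix x assume x: "x \<in> {p..<q}"
      have "(f \<circ> g) x = p2 k' * (p2 k * x + b) + b'" using kb(2) kb'(2) inside[OF x] x by auto
      also have "\<dots> = p2 (k' + k) * x + (p2 k' * b + b')" unfolding p2_add by (simp add: algebra_simps)
      finally show "(f \<circ> g) x = p2 (k' + k) * x + (p2 k' * b + b')" .
    qed
  qed
  have PG: "0 \<in> Pg" "1 \<in> Pg" using Pg unfolding gapform_def by auto
  have A: "gapform Q (f \<circ> g)"
    unfolding gapform_def
  proof (intro conjI allI impI)
    show "0 \<in> Q" "1 \<in> Q" using PG PgQ by auto
  qed (use finQ Q01 Qdy gaps in auto)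
  have B: "bij_betw (f \<circ> g) {0..<1} {0..<1}"
    using bij_betw_trans Fset_D(1)[OF f] Fset_D(1)[OF g] by blast
  have C: "\<forall>x. x \<notin> {0..<1} \<longrightarrow> (f \<circ> g) x = x" using Fset_D(2)[OF f] Fset_D(2)[OF g] by auto
  have D: "strict_mono_on {0..<1} (f \<circ> g)"
    unfolding strict_mono_on_def using Fset_strict_mono[OF f] Fset_strict_mono[OF g] by auto
  show ?thesis unfolding Fset_def
    apply (rule CollectI) apply (intro conjI) apply (rule B) apply (rule C) apply (rule D) apply (rule exI[of _ Q], rule A) done
qed

definition finv :: "(real \<Rightarrow> real) \<Rightarrow> real \<Rightarrow> real" where
  "finv f = inv_into UNIV f"

lemma Fset_inv_apply: "f \<in> Fset \<Longrightarrow> finv f (f x) = x"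
  unfolding finv_def using Fset_inj inv_into_f_f by (metis UNIV_I)
lemma Fset_apply_inv: "f \<in> Fset \<Longrightarrow> f (finv f y) = y"
  unfolding finv_def using Fset_surj f_inv_into_f by (metis UNIV_I)

lemma Fset_inv:
  assumes f: "f \<in> Fset" shows "finv f \<in> Fset"
proof -
  obtain P where P: "gapform P f" using Fset_D(4)[OF f] by blast
  define Q where "Q = f ` P"
  have fi: "\<And>x. finv f (f x) = x" "\<And>y. f (finv f y) = y" using Fset_inv_apply[OF f] Fset_apply_inv[OF f] by auto
  have Q01: "Q \<subseteq> {0..1}" using P Fset_maps_closed_iff[OF f] unfolding Q_def gapform_def by auto
  have finQ: "finite Q" using P unfolding Q_def gapform_def by auto
  have Q0: "0 \<in> Q" "1 \<in> Q" using P Fset_0[OF f] Fset_1[OF f] unfolding Q_def gapform_def by force+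
  have Qdy: "\<forall>p\<in>Q. dyadic p"
  proof
    fix y assume "y \<in> Q"
    then obtain x where x: "x \<in> P" "y = f x" unfolding Q_def by auto
    show "dyadic y"
    proof (cases "x = 1")
      case True then show ?thesis using x Fset_1[OF f] dyadic_1 by simp
    next
      case False
      then have "x \<in> {0..<1}" using x P unfolding gapform_def by auto
      then obtain k b where "dyadic b" "f x = p2 k * x + b" using gapform_at[OF P] by blast
      moreover have "dyadic x" using x P unfolding gapform_def by auto
      ultimately show ?thesis using x dyadic_affine by simp
    qed
  qed
  have gaps: "aff_on (finv f) {p..<q}" if gq: "gap Q p q" for p q
  proof -
    obtain p0 q0 where pq: "p0 \<in> P" "q0 \<in> P" "p = f p0" "q = f q0"
      using gq unfolding gap_def Q_def by auto
    have "gap P p0 q0" unfolding gap_def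
    proof (intro conjI ballI)
      show "p0 < q0" using gq pq Fset_mono_iff[OF f] unfolding gap_def by auto
      fix r assume "r \<in> P"
      then have "f r \<le> p \<or> q \<le> f r" using gq unfolding gap_def Q_def by auto
      then show "r \<le> p0 \<or> q0 \<le> r" using pq Fset_le_iff[OF f] by auto
    qed (use pq in auto)
    then have "aff_on f {p0..<q0}" using P unfolding gapform_def by auto
    then obtain k b where kb: "dyadic b" "\<forall>x\<in>{p0..<q0}. f x = p2 k * x + b" unfolding aff_on_def by blast
    show ?thesis unfolding aff_on_def
    proof (intro exI conjI ballI)
      show "dyadic (- (p2 (-k) * b))" using kb by (simp add: dyadic_minus dyadic_mult dyadic_p2)
      fix y assume y: "y \<in> {p..<q}"
      have "finv f y \<in> {p0..<q0}" using y pq fi Fset_le_iff[OF f] Fset_mono_iff[OF f]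
        by (metis atLeastLessThan_iff)
      then have "y = p2 k * finv f y + b" using kb fi by metis
      then have "p2 (-k) * y = p2 (-k) * (p2 k * finv f y + b)" by simp
      also have "\<dots> = (p2 (-k) * p2 k) * finv f y + p2 (-k) * b" by (simp only: distrib_left mult.assoc)
      finally have "p2 (-k) * y = (p2 (-k) * p2 k) * finv f y + p2 (-k) * b" .
      then show "finv f y = p2 (- k) * y + - (p2 (- k) * b)"
        unfolding p2_inv by simp
    qed
  qed
  have A: "gapform Q (finv f)" unfolding gapform_def
    by (intro conjI allI impI) (use finQ Q01 Q0 Qdy gaps in auto)
  have B: "bij_betw (finv f) {0..<1} {0..<1}"
  proof (rule bij_betw_byWitness[where f' = f])
    show "\<forall>a\<in>{0..<1}. f (finv f a) = a" using fi by auto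
    show "\<forall>a'\<in>{0..<1}. finv f (f a') = a'" using fi by auto
    show "finv f ` {0..<1} \<subseteq> {0..<1}" using Fset_maps_iff[OF f] fi by (metis image_subsetI)
    show "f ` {0..<1} \<subseteq> {0..<1}" using Fset_maps[OF f] by auto
  qed
  have C: "\<forall>x. x \<notin> {0..<1} \<longrightarrow> finv f x = x" using Fset_D(2)[OF f] fi by metis
  have D: "strict_mono_on {0..<1} (finv f)"
    unfolding strict_mono_on_def using Fset_mono_iff[OF f] fi by metis
  show ?thesis unfolding Fset_def
    apply (rule CollectI) apply (intro conjI) apply (rule B) apply (rule C) apply (rule D) apply (rule exI[of _ Q], rule A) done
qed


section \<open>Equivalence with the official definition\<close>

lemma seq_mono:
  fixes a :: "nat \<Rightarrow> real"
  assumes "\<forall>i<n. a i < a (Suc i)" "i < j" "j \<le> n"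
  shows "a i < a j"
  using assms(2,3)
proof (induction j)
  case 0 then show ?case by simp
next
  case (Suc j)
  show ?case
  proof (cases "i = j")
    case True then show ?thesis using assms(1) Suc by auto
  next
    case False then have "a i < a j" using Suc by auto
    moreover have "j < n" using Suc by auto
    then have "a j < a (Suc j)" using assms(1) by blast
    ultimately show ?thesis by linarith
  qed
qed

lemma seq_mono_le:
  fixes a :: "nat \<Rightarrow> real"
  assumes "\<forall>i<n. a i < a (Suc i)" "i \<le> j" "j \<le> n"
  shows "a i \<le> a j"
  using seq_mono[OF assms(1)] assms(2,3) by (cases "i = j") (auto intro: less_imp_le)

lemma thompsonF_sub_Fset: assumes "f \<in> thompsonF" shows "f \<in> Fset"
proof -
  have f: "bij_betw f {0..<1} {0..<1}" "\<forall>x. x \<notin> {0..<1} \<longrightarrow> f x = x" "strict_mono_on {0..<1} f"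
    using assms unfolding thompsonF_def thompsonV_def by auto
  obtain n a k b where nakb: "a 0 = 0" "a n = 1"
    "\<forall>i<n. a i < a (Suc i) \<and> dyadic (a i) \<and> dyadic (b i)"
    "\<forall>i<n. \<forall>x \<in> {a i..<a (Suc i)}. f x = 2 powr (of_int (k i)) * x + b i"
    using assms unfolding thompsonF_def thompsonV_def by blast
  have inc: "\<forall>i<n. a i < a (Suc i)" using nakb by auto
  define P where "P = a ` {..n}"
  have P01: "P \<subseteq> {0..1}"
  proof
    fix x assume "x \<in> P"
    then obtain i where i: "i \<le> n" "x = a i" unfolding P_def by auto
    have "a 0 \<le> a i" "a i \<le> a n" using seq_mono_le[OF inc] i by auto
    then show "x \<in> {0..1}" using i nakb by auto
  qed
  have Pdy: "\<forall>p\<in>P. dyadic p"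
  proof
    fix x assume "x \<in> P"
    then obtain i where i: "i \<le> n" "x = a i" unfolding P_def by auto
    show "dyadic x"
    proof (cases "i = n")
      case True then show ?thesis using i nakb dyadic_1 by simp
    next
      case False then show ?thesis using i nakb by auto
    qed
  qed
  have gaps: "aff_on f {p..<q}" if g: "gap P p q" for p q
  proof -
    obtain i j where ij: "i \<le> n" "j \<le> n" "p = a i" "q = a j" using g unfolding gap_def P_def by auto
    have "i < j"
    proof (rule ccontr)
      assume "\<not> i < j" then have "a j \<le> a i" using seq_mono_le[OF inc, of j i] ij by auto
      then show False using g ij unfolding gap_def by auto
    qed
    have "j = Suc i"
    proof (rule ccontr)
      assume "j \<noteq> Suc i" then have "Suc i < j" using \<open>i < j\<close> by auto
      then have "a i < a (Suc i)" "a (Suc i) < a j" using seq_mono[OF inc] ij by auto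
      moreover have "a (Suc i) \<in> P" using \<open>Suc i < j\<close> ij unfolding P_def by auto
      ultimately show False using g ij unfolding gap_def by force
    qed
    then have "i < n" using ij by auto
    then show ?thesis unfolding aff_on_def p2_def using nakb ij \<open>j = Suc i\<close> by blast
  qed
  have "gapform P f" unfolding gapform_def
  proof (intro conjI allI impI)
    show "0 \<in> P" using nakb unfolding P_def by force
    show "1 \<in> P" using nakb unfolding P_def by force
  qed (use P01 Pdy gaps P_def in auto)
  then show ?thesis unfolding Fset_def using f by blast
qed

lemma Fset_sub_thompsonF: assumes "f \<in> Fset" shows "f \<in> thompsonF"
proof -
  obtain P where P: "gapform P f" using Fset_D(4)[OF assms] by blast
  have finP: "finite P" and P01: "P \<subseteq> {0..1}" and P0: "0 \<in> P" and P1: "1 \<in> P"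
    and Pdy: "\<forall>p\<in>P. dyadic p" and Pg: "\<And>p q. gap P p q \<Longrightarrow> aff_on f {p..<q}"
    using P unfolding gapform_def by auto
  define xs where "xs = sorted_list_of_set P"
  have sx: "sorted_wrt (<) xs" unfolding xs_def by (rule strict_sorted_list_of_set)
  have setx: "set xs = P" unfolding xs_def using finP by simp
  have nth_less: "\<And>i j. i < j \<Longrightarrow> j < length xs \<Longrightarrow> xs ! i < xs ! j"
    using sorted_wrt_nth_less[OF sx] by auto
  have nth_le: "\<And>i j. i \<le> j \<Longrightarrow> j < length xs \<Longrightarrow> xs ! i \<le> xs ! j"
    using nth_less by (metis order_le_less)
  have "card P \<ge> 2"
  proof -
    have "{0, 1} \<subseteq> P" using P0 P1 by auto
    then have "card {0::real, 1} \<le> card P" using finP card_mono by blast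
    then show ?thesis by simp
  qed
  moreover have "length xs = card P" unfolding xs_def by simp
  ultimately have L: "length xs \<ge> 2" by simp
  define n where "n = length xs - 1"
  define a where "a i = xs ! i" for i
  have inP: "i < length xs \<Longrightarrow> a i \<in> P" for i using setx unfolding a_def by auto
  have a0: "a 0 = 0"
  proof -
    obtain j where j: "j < length xs" "xs ! j = 0" using P0 setx by (metis in_set_conv_nth)
    have "a 0 \<ge> 0" using inP[of 0] L P01 by force
    moreover have "a 0 \<le> xs ! j" unfolding a_def using nth_le[of 0 j] j by auto
    ultimately show ?thesis using j by auto
  qed
  have an: "a n = 1"
  proof -
    obtain j where j: "j < length xs" "xs ! j = 1" using P1 setx by (metis in_set_conv_nth)
    have "a n \<le> 1" using inP[of n] L P01 unfolding n_def by force
    moreover have "xs ! j \<le> a n" unfolding a_def n_def using nth_le[of j "length xs - 1"] j by auto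
    ultimately show ?thesis using j by auto
  qed
  have inc: "\<forall>i<n. a i < a (Suc i)" unfolding a_def n_def using nth_less by auto
  have dy: "\<forall>i<n. dyadic (a i)" using inP Pdy unfolding n_def by auto
  have gp: "gap P (a i) (a (Suc i))" if i: "i < n" for i
    unfolding gap_def
  proof (intro conjI ballI)
    show "a i \<in> P" "a (Suc i) \<in> P" using inP i unfolding n_def by auto
    show "a i < a (Suc i)" using inc i by auto
    fix r assume "r \<in> P"
    then obtain j where j: "j < length xs" "r = xs ! j" using setx by (metis in_set_conv_nth)
    show "r \<le> a i \<or> a (Suc i) \<le> r"
    proof (cases "j \<le> i")
      case True then show ?thesis using nth_le[of j i] j i unfolding a_def n_def by auto
    next
      case False then show ?thesis using nth_le[of "Suc i" j] j i unfolding a_def n_def by auto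
    qed
  qed
  have "\<forall>i. \<exists>kb. i < n \<longrightarrow> dyadic (snd kb) \<and> (\<forall>x\<in>{a i..<a (Suc i)}. f x = p2 (fst kb) * x + snd kb)"
  proof
    fix i show "\<exists>kb. i < n \<longrightarrow> dyadic (snd kb) \<and> (\<forall>x\<in>{a i..<a (Suc i)}. f x = p2 (fst kb) * x + snd kb)"
    proof (cases "i < n")
      case True
      then have "aff_on f {a i..<a (Suc i)}" using Pg gp by blast
      then obtain k b where "dyadic b" "\<forall>x\<in>{a i..<a (Suc i)}. f x = p2 k * x + b" unfolding aff_on_def by blast
      then show ?thesis by (intro exI[of _ "(k, b)"]) auto
    qed auto
  qed
  then obtain kb where kb: "\<And>i. i < n \<Longrightarrow> dyadic (snd (kb i)) \<and> (\<forall>x\<in>{a i..<a (Suc i)}. f x = p2 (fst (kb i)) * x + snd (kb i))"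
    by metis
  have "\<exists>(n::nat) (a::nat \<Rightarrow> real) (k::nat \<Rightarrow> int) (b::nat \<Rightarrow> real).
        a 0 = 0 \<and> a n = 1 \<and>
        (\<forall>i<n. a i < a (Suc i) \<and> dyadic (a i) \<and> dyadic (b i)) \<and>
        (\<forall>i<n. \<forall>x \<in> {a i..<a (Suc i)}. f x = 2 powr (of_int (k i)) * x + b i)"
    apply (rule exI[of _ n], rule exI[of _ a], rule exI[of _ "\<lambda>i. fst (kb i)"], rule exI[of _ "\<lambda>i. snd (kb i)"])
    using a0 an inc dy kb unfolding p2_def by auto
  then show ?thesis using Fset_D[OF assms] unfolding thompsonF_def thompsonV_def by blast
qed

lemma thompsonF_eq: "thompsonF = Fset"
  using thompsonF_sub_Fset Fset_sub_thompsonF by blast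

lemma thompsonF_sub_T: "thompsonF \<subseteq> thompsonT"
proof
  fix f assume f: "f \<in> thompsonF"
  then have fF: "f \<in> Fset" by (rule thompsonF_sub_Fset)
  have "strict_mono_on {0..<1} (\<lambda>x. frac (f x + 0))"
    unfolding strict_mono_on_def
  proof (intro allI impI)
    fix r s :: real assume rs: "r \<in> {0..<1} \<and> s \<in> {0..<1} \<and> r < s"
    have "f r \<in> {0..<1}" "f s \<in> {0..<1}" using Fset_maps[OF fF] rs by auto
    then have "frac (f r) = f r" "frac (f s) = f s" by (auto simp: frac_eq)
    then show "frac (f r + 0) < frac (f s + 0)" using Fset_strict_mono[OF fF] rs by auto
  qed
  then show "f \<in> thompsonT" using f unfolding thompsonT_def thompsonF_def by blast
qed

lemma thompsonT_sub_V: "thompsonT \<subseteq> thompsonV"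
  unfolding thompsonT_def by auto

abbreviation GF where "GF \<equiv> fun_group thompsonF"

lemma GF_carrier [simp]: "carrier GF = Fset" unfolding fun_group_def thompsonF_eq by simp
lemma GF_mult [simp]: "x \<otimes>\<^bsub>GF\<^esub> y = x \<circ> y" unfolding fun_group_def by simp
lemma GF_one [simp]: "\<one>\<^bsub>GF\<^esub> = id" unfolding fun_group_def by simp

lemma finv_comp1: "f \<in> Fset \<Longrightarrow> f \<circ> finv f = id"
  using Fset_apply_inv by (auto simp: fun_eq_iff)
lemma finv_comp2: "f \<in> Fset \<Longrightarrow> finv f \<circ> f = id"
  using Fset_inv_apply by (auto simp: fun_eq_iff)

lemma group_GF: "group GF"
proof (rule groupI)
  fix x assume x: "x \<in> carrier GF"
  show "\<exists>y\<in>carrier GF. y \<otimes>\<^bsub>GF\<^esub> x = \<one>\<^bsub>GF\<^esub>"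
    using x Fset_inv finv_comp2 by (intro bexI[of _ "finv x"]) auto
qed (auto simp: Fset_comp Fset_id comp_assoc)

lemma minv_fun_group:
  assumes "Fset \<subseteq> S" "f \<in> Fset"
  shows "inv\<^bsub>fun_group S\<^esub> f = finv f"
  unfolding m_inv_def
proof (rule the_equality)
  show "finv f \<in> carrier (fun_group S) \<and> f \<otimes>\<^bsub>fun_group S\<^esub> finv f = \<one>\<^bsub>fun_group S\<^esub> \<and>
        finv f \<otimes>\<^bsub>fun_group S\<^esub> f = \<one>\<^bsub>fun_group S\<^esub>"
    using assms Fset_inv finv_comp1 finv_comp2 unfolding fun_group_def by auto
  fix y assume "y \<in> carrier (fun_group S) \<and> f \<otimes>\<^bsub>fun_group S\<^esub> y = \<one>\<^bsub>fun_group S\<^esub> \<and>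
        y \<otimes>\<^bsub>fun_group S\<^esub> f = \<one>\<^bsub>fun_group S\<^esub>"
  then have "f \<circ> y = id" unfolding fun_group_def by auto
  then have "finv f \<circ> (f \<circ> y) = finv f" by simp
  then show "y = finv f" using finv_comp2[OF assms(2)] by (simp add: comp_assoc[symmetric])
qed

lemma GF_inv [simp]: "f \<in> Fset \<Longrightarrow> inv\<^bsub>GF\<^esub> f = finv f"
  using minv_fun_group[of thompsonF f] thompsonF_eq by simp

section \<open>Transfer to larger groups\<close>

lemma subgroup_transfer:
  assumes "Fset \<subseteq> S" "subgroup H GF"
  shows "subgroup H (fun_group S)"
proof -
  have HF: "H \<subseteq> Fset" using subgroup.subset[OF assms(2)] by simp
  show ?thesis
  proof
    show "H \<subseteq> carrier (fun_group S)" using HF assms(1) unfolding fun_group_def by auto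
    fix x y assume "x \<in> H" "y \<in> H"
    then show "x \<otimes>\<^bsub>fun_group S\<^esub> y \<in> H" using subgroup.m_closed[OF assms(2)] unfolding fun_group_def by auto
  next
    show "\<one>\<^bsub>fun_group S\<^esub> \<in> H" using subgroup.one_closed[OF assms(2)] unfolding fun_group_def by auto
  next
    fix x assume x: "x \<in> H"
    then have "inv\<^bsub>GF\<^esub> x \<in> H" using subgroup.m_inv_closed[OF assms(2)] by auto
    then show "inv\<^bsub>fun_group S\<^esub> x \<in> H" using x HF minv_fun_group[OF assms(1)] by auto
  qed
qed

lemma generate_transfer:
  assumes "Fset \<subseteq> S" "K \<subseteq> Fset"
  shows "generate (fun_group S) K = generate GF K"
proof
  show "generate (fun_group S) K \<subseteq> generate GF K"
  proof
    fix x assume "x \<in> generate (fun_group S) K"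
    then show "x \<in> generate GF K"
    proof (induction x rule: generate.induct)
      case one then show ?case using generate.one[of GF K] unfolding fun_group_def by (simp add: id_def)
    next
      case (incl h) then show ?case by (rule generate.incl)
    next
      case (inv h)
      then have "inv\<^bsub>GF\<^esub> h \<in> generate GF K" by (rule generate.inv)
      then show ?case using inv assms minv_fun_group[OF assms(1)] by auto
    next
      case (eng h1 h2)
      have "h1 \<otimes>\<^bsub>GF\<^esub> h2 \<in> generate GF K" by (rule generate.eng[OF eng.IH])
      then show ?case unfolding fun_group_def by (simp add: comp_def)
    qed
  qed
next
  show "generate GF K \<subseteq> generate (fun_group S) K"
  proof
    fix x assume "x \<in> generate GF K"
    then show "x \<in> generate (fun_group S) K"
    proof (induction x rule: generate.induct)
      case one then show ?case using generate.one[of "fun_group S" K] unfolding fun_group_def by (simp add: id_def)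
    next
      case (incl h) then show ?case by (rule generate.incl)
    next
      case (inv h)
      then have "inv\<^bsub>fun_group S\<^esub> h \<in> generate (fun_group S) K" by (rule generate.inv)
      then show ?case using inv assms minv_fun_group[OF assms(1)] by auto
    next
      case (eng h1 h2)
      have "h1 \<otimes>\<^bsub>fun_group S\<^esub> h2 \<in> generate (fun_group S) K" by (rule generate.eng[OF eng.IH])
      then show ?case unfolding fun_group_def by (simp add: comp_def)
    qed
  qed
qed

lemma fin_gen_transfer:
  assumes "Fset \<subseteq> S" "H \<subseteq> Fset"
  shows "fin_gen_subgroup (fun_group S) H \<longleftrightarrow> fin_gen_subgroup GF H"
proof
  assume "fin_gen_subgroup (fun_group S) H"
  then obtain K where K: "finite K" "K \<subseteq> carrier (fun_group S)" "H = generate (fun_group S) K"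
    unfolding fin_gen_subgroup_def by blast
  have "K \<subseteq> H" using K(3) generate.incl[of _ K "fun_group S"] by blast
  then have KF: "K \<subseteq> Fset" using assms(2) by auto
  then show "fin_gen_subgroup GF H" unfolding fin_gen_subgroup_def
    using K generate_transfer[OF assms(1) KF] by auto
next
  assume "fin_gen_subgroup GF H"
  then obtain K where K: "finite K" "K \<subseteq> carrier GF" "H = generate GF K"
    unfolding fin_gen_subgroup_def by blast
  then have KF: "K \<subseteq> Fset" by simp
  have "K \<subseteq> carrier (fun_group S)" using KF assms(1) unfolding fun_group_def by auto
  moreover have "H = generate (fun_group S) K" using K(3) generate_transfer[OF assms(1) KF] by simp
  ultimately show "fin_gen_subgroup (fun_group S) H" unfolding fin_gen_subgroup_def
    using K(1) by blast
qed

lemma realisable_transfer: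
  assumes "Fset \<subseteq> S" "realisable GF n c"
  shows "realisable (fun_group S) n c"
proof -
  obtain H where H: "\<forall>i\<in>{1..n}. subgroup (H i) GF"
    "\<forall>I. I \<noteq> {} \<and> I \<subseteq> {1..n} \<longrightarrow> (fin_gen_subgroup GF (\<Inter>i\<in>I. H i) \<longleftrightarrow> c I = 0)"
    using assms(2) unfolding realisable_def by blast
  have "\<forall>i\<in>{1..n}. subgroup (H i) (fun_group S)" using H(1) subgroup_transfer[OF assms(1)] by blast
  moreover have "\<forall>I. I \<noteq> {} \<and> I \<subseteq> {1..n} \<longrightarrow> (fin_gen_subgroup (fun_group S) (\<Inter>i\<in>I. H i) \<longleftrightarrow> c I = 0)"
  proof (intro allI impI)
    fix I assume I: "I \<noteq> {} \<and> I \<subseteq> {1..n}"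
    then obtain i where i: "i \<in> I" by auto
    then have "H i \<subseteq> Fset" using H(1) I subgroup.subset by fastforce
    then have "(\<Inter>i\<in>I. H i) \<subseteq> Fset" using i by auto
    then show "fin_gen_subgroup (fun_group S) (\<Inter>i\<in>I. H i) \<longleftrightarrow> c I = 0"
      using fin_gen_transfer[OF assms(1)] H(2) I by blast
  qed
  ultimately show ?thesis unfolding realisable_def by blast
qed

lemma saturated_transfer:
  assumes "intersection_saturated GF"
  shows "intersection_saturated (fun_group thompsonF) \<and> intersection_saturated (fun_group thompsonT) \<and>
         intersection_saturated (fun_group thompsonV)"
proof -
  have T: "Fset \<subseteq> thompsonT" using thompsonF_sub_T thompsonF_eq by simp
  have V: "Fset \<subseteq> thompsonV" using T thompsonT_sub_V by auto
  show ?thesis using assms realisable_transfer[OF T] realisable_transfer[OF V]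
    unfolding intersection_saturated_def by blast
qed


interpretation GFG: group GF by (rule group_GF)

section \<open>Placing a map into a dyadic interval\<close>

definition place :: "real \<Rightarrow> real \<Rightarrow> (real \<Rightarrow> real) \<Rightarrow> real \<Rightarrow> real" where
  "place c w g x = (if c \<le> x \<and> x < c + w then c + w * g ((x - c) / w) else x)"

lemma place_comp:
  assumes "g \<in> Fset" "h \<in> Fset" "w > 0"
  shows "place c w g \<circ> place c w h = place c w (g \<circ> h)"
proof
  fix x
  show "(place c w g \<circ> place c w h) x = place c w (g \<circ> h) x"
  proof (cases "c \<le> x \<and> x < c + w")
    case True
    then have "(x - c) / w \<in> {0..<1}" using assms(3) by (auto simp: field_simps)
    then have hin: "h ((x - c) / w) \<in> {0..<1}" using Fset_maps[OF assms(2)] by blast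
    then have "c \<le> c + w * h ((x - c) / w) \<and> c + w * h ((x - c) / w) < c + w"
      using assms(3) by (auto simp: field_simps)
    then show ?thesis using True assms(3) unfolding place_def by auto
  next
    case False then show ?thesis unfolding place_def by auto
  qed
qed

lemma place_id: "place c w id = id"
  unfolding place_def by (auto simp: fun_eq_iff)

lemma place_strict_mono:
  assumes "g \<in> Fset" "w > 0" "x < y"
  shows "place c w g x < place c w g y"
proof -
  have r: "c \<le> z \<and> z < c + w \<Longrightarrow> c \<le> place c w g z \<and> place c w g z < c + w" for z
  proof -
    assume z: "c \<le> z \<and> z < c + w"
    then have "(z - c) / w \<in> {0..<1}" using assms(2) by (auto simp: field_simps)
    then have "g ((z - c) / w) \<in> {0..<1}" using Fset_maps[OF assms(1)] by blast
    then show ?thesis using z assms(2) unfolding place_def by (auto simp: field_simps)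
  qed
  show ?thesis
  proof (cases "c \<le> x \<and> x < c + w")
    case xin: True
    show ?thesis
    proof (cases "c \<le> y \<and> y < c + w")
      case True
      have "(x - c) / w < (y - c) / w" using assms(2,3) by (simp add: divide_strict_right_mono)
      then have "g ((x - c) / w) < g ((y - c) / w)" using Fset_strict_mono[OF assms(1)] by blast
      then show ?thesis using xin True assms(2) unfolding place_def by auto
    next
      case False
      then have "c + w \<le> y" using xin assms(3) by auto
      then show ?thesis using r[OF xin] False unfolding place_def by auto
    qed
  next
    case xout: False
    show ?thesis
    proof (cases "c \<le> y \<and> y < c + w")
      case True
      then have "x < c" using xout assms(3) by auto
      then show ?thesis using r[OF True] xout unfolding place_def by auto
    next
      case False then show ?thesis using xout assms(3) unfolding place_def by auto
    qed
  qed
qed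

lemma place_Fset:
  assumes g: "g \<in> Fset" and c: "dyadic c" "0 \<le> c" and w: "w = p2 e" and cw: "c + w \<le> 1"
  shows "place c w g \<in> Fset"
proof -
  have wpos: "w > 0" using w by simp
  obtain P where P: "gapform P g" using Fset_D(4)[OF g] by blast
  have finP: "finite P" and P01: "P \<subseteq> {0..1}" and P0: "0 \<in> P" and P1: "1 \<in> P"
    and Pdy: "\<forall>p\<in>P. dyadic p" and Pg: "\<And>p q. gap P p q \<Longrightarrow> aff_on g {p..<q}"
    using P unfolding gapform_def by auto
  define L where "L y = c + w * y" for y
  define Q where "Q = {0, 1} \<union> L ` P"
  have LQ: "L 0 \<in> Q" "L 1 \<in> Q" using P0 P1 unfolding Q_def by auto
  have L0: "L 0 = c" and L1: "L 1 = c + w" unfolding L_def by auto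
  have Q01: "Q \<subseteq> {0..1}"
  proof
    fix x assume "x \<in> Q"
    then consider "x = 0" | "x = 1" | p where "p \<in> P" "x = L p" unfolding Q_def by auto
    then show "x \<in> {0..1}"
    proof cases
      case 3
      then have "0 \<le> p" "p \<le> 1" using P01 by auto
      then have "0 \<le> w * p" "w * p \<le> w" using wpos by (auto simp: mult_left_le)
      then show ?thesis using 3 c cw unfolding L_def by auto
    qed auto
  qed
  have Qdy: "\<forall>p\<in>Q. dyadic p"
    using Pdy c(1) unfolding Q_def L_def w by (auto simp: dyadic_0 dyadic_1 dyadic_add dyadic_mult dyadic_p2)
  have gaps: "aff_on (place c w g) {r..<s}" if gq: "gap Q r s" for r s
  proof (cases "s \<le> c \<or> c + w \<le> r")
    case True
    then have "\<forall>x\<in>{r..<s}. place c w g x = p2 0 * x + 0" unfolding place_def by auto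
    then show ?thesis unfolding aff_on_def using dyadic_0 by blast
  next
    case False
    then have "c < s" "r < c + w" by auto
    then have cr: "c \<le> r" using gq LQ(1) L0 unfolding gap_def by force
    have sw: "s \<le> c + w" using gq LQ(2) L1 \<open>r < c + w\<close> unfolding gap_def by force
    have r': "(r - c) / w \<in> {0..<1}" using cr \<open>r < c + w\<close> wpos by (auto simp: field_simps)
    obtain p' q' where pq: "gap P p' q'" "p' \<le> (r - c) / w" "(r - c) / w < q'"
      using gap_exists[OF finP P01 P1 P0 r'] by blast
    have "L q' \<in> Q" using pq unfolding gap_def Q_def by auto
    moreover have "r < L q'" using pq(3) wpos unfolding L_def by (auto simp: field_simps)
    ultimately have "s \<le> L q'" using gq unfolding gap_def by force
    then have sq: "(s - c) / w \<le> q'" using wpos unfolding L_def by (auto simp: field_simps)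
    obtain k b where kb: "dyadic b" "\<forall>y\<in>{p'..<q'}. g y = p2 k * y + b" using Pg[OF pq(1)] unfolding aff_on_def by blast
    show ?thesis unfolding aff_on_def
    proof (intro exI conjI ballI)
      show "dyadic (c + w * b - p2 k * c)" using kb c unfolding w
        by (intro dyadic_diff dyadic_add dyadic_mult dyadic_p2) auto
      fix x assume x: "x \<in> {r..<s}"
      then have xin: "c \<le> x \<and> x < c + w" using cr sw by auto
      have "(x - c) / w \<in> {p'..<q'}"
      proof -
        have "(r - c) / w \<le> (x - c) / w" "(x - c) / w < (s - c) / w" using x wpos
          by (auto simp: divide_right_mono divide_strict_right_mono)
        then show ?thesis using pq sq by auto
      qed
      then have "g ((x - c) / w) = p2 k * ((x - c) / w) + b" using kb by blast
      then have "place c w g x = c + w * (p2 k * ((x - c) / w) + b)" using xin unfolding place_def by auto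
      also have "\<dots> = p2 k * x + (c + w * b - p2 k * c)" using wpos by (simp add: field_simps)
      finally show "place c w g x = p2 k * x + (c + w * b - p2 k * c)" .
    qed
  qed
  have A: "gapform Q (place c w g)" unfolding gapform_def
  proof (intro conjI allI impI)
    show "finite Q" using finP unfolding Q_def by auto
    show "0 \<in> Q" "1 \<in> Q" unfolding Q_def by auto
  qed (use Q01 Qdy gaps in auto)
  have out: "\<And>x. x \<notin> {0..<1} \<Longrightarrow> place c w g x = x" using c cw unfolding place_def by auto
  have gi: "finv g \<in> Fset" using Fset_inv[OF g] .
  have inv1: "place c w g (place c w (finv g) x) = x" for x
    using place_comp[OF g gi wpos] finv_comp1[OF g] place_id by (metis comp_apply id_apply)
  have inv2: "place c w (finv g) (place c w g x) = x" for x
    using place_comp[OF gi g wpos] finv_comp2[OF g] place_id by (metis comp_apply id_apply)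
  have maps: "\<And>h x. h \<in> Fset \<Longrightarrow> x \<in> {0..<1} \<Longrightarrow> place c w h x \<in> {0..<1}"
  proof -
    fix h and x :: real assume h: "h \<in> Fset" and x: "x \<in> {0..<1}"
    have "place c w h 0 \<le> place c w h x"
      using place_strict_mono[OF h wpos, where c=c and x=0 and y=x] x by (cases "x = 0") auto
    moreover have "place c w h x < place c w h 1" using place_strict_mono[OF h wpos, where c=c and x=x and y=1] x by auto
    moreover have "place c w h 0 = 0" using Fset_0[OF h] c unfolding place_def by auto
    moreover have "place c w h 1 = 1" using cw unfolding place_def by auto
    ultimately show "place c w h x \<in> {0..<1}" by auto
  qed
  have B: "bij_betw (place c w g) {0..<1} {0..<1}"
    by (rule bij_betw_byWitness[where f' = "place c w (finv g)"]) (use inv1 inv2 maps g gi in auto)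
  have D: "strict_mono_on {0..<1} (place c w g)"
    unfolding strict_mono_on_def using place_strict_mono[OF g wpos] by auto
  show ?thesis unfolding Fset_def
    apply (rule CollectI) apply (intro conjI) apply (rule B) using out apply blast apply (rule D) apply (rule exI[of _ Q], rule A) done
qed

definition x0 :: "real \<Rightarrow> real" where
  "x0 x = (if 0 \<le> x \<and> x < 1/4 then 2 * x else if 1/4 \<le> x \<and> x < 1/2 then x + 1/4
           else if 1/2 \<le> x \<and> x < 1 then x / 2 + 1/2 else x)"

definition y0 :: "real \<Rightarrow> real" where
  "y0 y = (if 0 \<le> y \<and> y < 1/2 then y / 2 else if 1/2 \<le> y \<and> y < 3/4 then y - 1/4
           else if 3/4 \<le> y \<and> y < 1 then 2 * y - 1 else y)"

lemma dyadic_frac: "dyadic (of_int a / 2 ^ k)" unfolding dyadic_def by blast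

lemma x0_Fset: "x0 \<in> Fset"
proof -
  define P :: "real set" where "P = {0, 1/4, 1/2, 1}"
  have d14: "dyadic (1/4)" using dyadic_frac[of 1 2] by simp
  have d12: "dyadic (1/2)" using dyadic_frac[of 1 1] by simp
  have p2_1: "p2 1 = 2" and p2_m1: "p2 (-1) = 1/2" by (simp_all add: p2_def powr_minus_divide)
  have gaps: "aff_on x0 {p..<q}" if "gap P p q" for p q
  proof -
    have "(p = 0 \<and> q = 1/4) \<or> (p = 1/4 \<and> q = 1/2) \<or> (p = 1/2 \<and> q = 1)"
      using that unfolding gap_def P_def by auto
    then show ?thesis
    proof (elim disjE conjE)
      assume "p = 0" "q = 1/4"
      then have "\<forall>x\<in>{p..<q}. x0 x = p2 1 * x + 0" unfolding x0_def p2_1 by auto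
      then show ?thesis unfolding aff_on_def using dyadic_0 by blast
    next
      assume "p = 1/4" "q = 1/2"
      then have "\<forall>x\<in>{p..<q}. x0 x = p2 0 * x + 1/4" unfolding x0_def by auto
      then show ?thesis unfolding aff_on_def using d14 by blast
    next
      assume "p = 1/2" "q = 1"
      then have "\<forall>x\<in>{p..<q}. x0 x = p2 (-1) * x + 1/2" unfolding x0_def p2_m1 by auto
      then show ?thesis unfolding aff_on_def using d12 by blast
    qed
  qed
  have A: "gapform P x0" unfolding gapform_def
    by (intro conjI allI impI) (use gaps d14 d12 dyadic_0 dyadic_1 in \<open>auto simp: P_def\<close>)
  have B: "bij_betw x0 {0..<1} {0..<1}"
    by (rule bij_betw_byWitness[where f' = y0]) (auto simp: x0_def y0_def field_simps)
  have C: "\<forall>x. x \<notin> {0..<1} \<longrightarrow> x0 x = x" unfolding x0_def by auto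
  have D: "strict_mono_on {0..<1} x0" unfolding strict_mono_on_def x0_def by auto
  show ?thesis unfolding Fset_def
    apply (rule CollectI) apply (intro conjI) apply (rule B) apply (rule C) apply (rule D) apply (rule exI[of _ P], rule A) done
qed

lemma x0_gt: "0 < y \<Longrightarrow> y < 1 \<Longrightarrow> y < x0 y"
  unfolding x0_def by auto

definition a0 :: "real \<Rightarrow> real" where "a0 = place (1/4) (1/4) x0"

lemma a0_Fset: "a0 \<in> Fset"
  unfolding a0_def
  by (rule place_Fset[OF x0_Fset, where e = "-2"]) (auto simp: p2_def powr_minus_divide dyadic_frac[of 1 2, simplified])

lemma a0_out: "x < 1/4 \<or> 1/2 \<le> x \<Longrightarrow> a0 x = x"
  unfolding a0_def place_def by auto

lemma a0_quarter: "a0 (1/4) = 1/4"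
  unfolding a0_def place_def x0_def by auto

lemma a0_moves: "a0 (5/16) = 3/8"
  unfolding a0_def place_def x0_def by auto

definition xp :: "int \<Rightarrow> real \<Rightarrow> real" where "xp k = pow GF x0 k"

lemma x0_carrier [simp]: "x0 \<in> carrier GF" using x0_Fset by simp

lemma xp_Fset [simp]: "xp k \<in> Fset"
  unfolding xp_def using GFG.int_pow_closed[OF x0_carrier] by simp

lemma xp_add: "xp (i + j) = xp i \<circ> xp j"
  unfolding xp_def using GFG.int_pow_mult[OF x0_carrier] by simp

lemma xp_0 [simp]: "xp 0 = id" unfolding xp_def by simp
lemma xp_1 [simp]: "xp 1 = x0" unfolding xp_def by (rule GFG.int_pow_1[OF x0_carrier])

lemma xp_add_apply: "xp (i + j) x = xp i (xp j x)" using xp_add by simp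

lemma xp_cancel: "xp (- k) (xp k x) = x"
  using xp_add_apply[of "-k" k x] by simp

lemma xp_cancel2: "xp k (xp (- k) x) = x"
  using xp_add_apply[of k "-k" x] by simp

lemma xp_neg: "xp (- k) = finv (xp k)"
proof -
  have e: "xp (-k) \<circ> xp k = id" using xp_add[of "-k" k] by simp
  have "finv (xp k) = (xp (-k) \<circ> xp k) \<circ> finv (xp k)" unfolding e by simp
  also have "\<dots> = xp (-k) \<circ> (xp k \<circ> finv (xp k))" by (simp add: comp_assoc)
  also have "\<dots> = xp (-k)" using finv_comp1[OF xp_Fset] by simp
  finally show ?thesis by simp
qed

definition u :: "int \<Rightarrow> real" where "u k = xp k (1/4)"

lemma u_0: "u 0 = 1/4" unfolding u_def by simp
lemma u_1: "u 1 = 1/2" unfolding u_def by (simp add: x0_def)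
lemma u_Suc: "u (k + 1) = x0 (u k)" unfolding u_def using xp_add_apply[of 1 k] by (simp add: add.commute)

lemma Fset_open01: assumes "f \<in> Fset" "0 < x" "x < 1" shows "0 < f x \<and> f x < 1"
  using Fset_strict_mono[OF assms(1)] Fset_0[OF assms(1)] Fset_1[OF assms(1)] assms(2,3) by metis

lemma u_01: "0 < u k \<and> u k < 1"
  unfolding u_def using Fset_open01[OF xp_Fset] by simp

lemma u_step: "u k < u (k + 1)"
  using u_Suc x0_gt u_01 by simp

lemma u_mono_nat: "u k < u (k + 1 + int d)"
proof (induction d)
  case 0 then show ?case using u_step by simp
next
  case (Suc d)
  have "u (k + 1 + int d) < u (k + 1 + int d + 1)" by (rule u_step)
  then show ?case using Suc by (simp add: add.assoc)
qed

lemma u_mono: "k < l \<Longrightarrow> u k < u l"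
  using u_mono_nat[of k "nat (l - k - 1)"] by simp

lemma u_less_iff: "u k < u l \<longleftrightarrow> k < l"
proof
  assume a: "u k < u l"
  show "k < l"
  proof (rule ccontr)
    assume "\<not> k < l"
    then have "l = k \<or> l < k" by auto
    then show False using a u_mono[of l k] by auto
  qed
qed (rule u_mono)

lemma u_le_iff: "u k \<le> u l \<longleftrightarrow> k \<le> l"
  by (simp add: not_less[symmetric] u_less_iff)

lemma u_inj: "u k = u l \<Longrightarrow> k = l"
  by (metis order_less_irrefl linorder_neqE u_mono)

lemma xp_u: "xp j (u k) = u (j + k)"
  unfolding u_def by (simp add: xp_add_apply)

lemma xp_mono: "x < y \<Longrightarrow> xp k x < xp k y"
  using Fset_strict_mono[OF xp_Fset] .
lemma xp_mono_iff: "xp k x < xp k y \<longleftrightarrow> x < y"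
  using Fset_mono_iff[OF xp_Fset] .
lemma xp_le_iff: "xp k x \<le> xp k y \<longleftrightarrow> x \<le> y"
  using Fset_le_iff[OF xp_Fset] .

definition aj :: "int \<Rightarrow> real \<Rightarrow> real" where "aj j = xp j \<circ> a0 \<circ> xp (- j)"

lemma aj_Fset: "aj j \<in> Fset"
  unfolding aj_def by (intro Fset_comp a0_Fset xp_Fset)

lemma aj_gf: "aj j = xp j \<otimes>\<^bsub>GF\<^esub> a0 \<otimes>\<^bsub>GF\<^esub> inv\<^bsub>GF\<^esub> (xp j)"
  unfolding aj_def using xp_neg by simp

lemma aj_out:
  assumes "x < u j \<or> u (j + 1) \<le> x"
  shows "aj j x = x"
proof -
  have "xp (-j) x < 1/4 \<or> 1/2 \<le> xp (-j) x"
  proof -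
    have "xp (-j) (u j) = 1/4" "xp (-j) (u (j+1)) = 1/2" using xp_u[of "-j"] u_0 u_1 by auto
    then show ?thesis using assms xp_mono_iff[of "-j"] xp_le_iff[of "-j"] by metis
  qed
  then have "a0 (xp (-j) x) = xp (-j) x" by (rule a0_out)
  then show ?thesis unfolding aj_def using xp_cancel2 by simp
qed

lemma aj_u: "aj j (u k) = u k"
proof -
  have "a0 (u (k - j)) = u (k - j)"
  proof (cases "k - j = 0")
    case True then have "u (k - j) = 1/4" using u_0 by simp
    then show ?thesis by (metis a0_quarter)
  next
    case False
    then have "k - j < 0 \<or> 1 \<le> k - j" by auto
    then have "u (k - j) < u 0 \<or> u 1 \<le> u (k - j)" using u_less_iff u_le_iff by auto
    then show ?thesis using u_0 u_1 a0_out by auto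
  qed
  then show ?thesis unfolding aj_def using xp_u by simp
qed

lemma aj_moves: "\<exists>x. u (j) \<le> x \<and> x < u (j + 1) \<and> aj j x \<noteq> x"
proof -
  define x where "x = xp j (5/16)"
  have h1: "u j \<le> x" unfolding x_def u_def using xp_le_iff[of j "1/4" "5/16"] by simp
  have "xp j (5/16) < xp j (1/2)" by (rule xp_mono) simp
  moreover have "xp j (1/2) = u (j + 1)" using xp_u[of j 1] u_1 by simp
  ultimately have h2: "x < u (j + 1)" unfolding x_def by simp
  have "aj j x = xp j (a0 (5/16))" unfolding aj_def x_def using xp_cancel by simp
  then have h3: "aj j x = xp j (3/8)" unfolding a0_moves .
  have "xp j (5/16) < xp j (3/8)" by (rule xp_mono) simp
  then have "aj j x \<noteq> x" using h3 unfolding x_def by simp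
  then show ?thesis using h1 h2 by blast
qed


section \<open>The subgroup B\<close>

lemma subgroupGF_I:
  assumes "H \<subseteq> Fset" "id \<in> H" "\<And>f g. f \<in> H \<Longrightarrow> g \<in> H \<Longrightarrow> f \<circ> g \<in> H"
    "\<And>f. f \<in> H \<Longrightarrow> finv f \<in> H"
  shows "subgroup H GF"
proof
  show "H \<subseteq> carrier GF" using assms(1) by simp
  show "\<one>\<^bsub>GF\<^esub> \<in> H" using assms(2) by simp
  fix x y assume "x \<in> H" "y \<in> H"
  then show "x \<otimes>\<^bsub>GF\<^esub> y \<in> H" using assms(3) by simp
next
  fix x assume "x \<in> H"
  then show "inv\<^bsub>GF\<^esub> x \<in> H" using assms(1,4) by auto
qed

lemma finv_fix: "f \<in> Fset \<Longrightarrow> f x = x \<Longrightarrow> finv f x = x"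
  using Fset_inv_apply[of f x] by simp

definition Bgrp :: "(real \<Rightarrow> real) set" where "Bgrp = generate GF (range aj)"

lemma range_aj_carrier: "range aj \<subseteq> carrier GF" using aj_Fset by auto

lemma B_subgroup: "subgroup Bgrp GF"
  unfolding Bgrp_def by (rule GFG.generate_is_subgroup[OF range_aj_carrier])

lemma B_Fset: "b \<in> Bgrp \<Longrightarrow> b \<in> Fset"
  using subgroup.subset[OF B_subgroup] by auto

lemma aj_B: "aj j \<in> Bgrp" unfolding Bgrp_def by (rule generate.incl) simp

lemma B_fix_u: assumes "b \<in> Bgrp" shows "b (u k) = u k"
proof -
  define Fx where "Fx = {f \<in> Fset. \<forall>k. f (u k) = u k}"
  have "subgroup Fx GF"
  proof (rule subgroupGF_I)
    show "Fx \<subseteq> Fset" unfolding Fx_def by auto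
    show "id \<in> Fx" unfolding Fx_def using Fset_id by auto
    show "\<And>f g. f \<in> Fx \<Longrightarrow> g \<in> Fx \<Longrightarrow> f \<circ> g \<in> Fx" unfolding Fx_def using Fset_comp by auto
    show "\<And>f. f \<in> Fx \<Longrightarrow> finv f \<in> Fx" unfolding Fx_def using Fset_inv finv_fix by auto
  qed
  moreover have "range aj \<subseteq> Fx" unfolding Fx_def using aj_Fset aj_u by auto
  ultimately have "Bgrp \<subseteq> Fx" unfolding Bgrp_def by (rule GFG.generate_subgroup_incl[rotated])
  then show ?thesis using assms unfolding Fx_def by auto
qed

lemma B_xp_unique:
  assumes "b \<in> Bgrp" "b' \<in> Bgrp" "b \<circ> xp k = b' \<circ> xp k'"
  shows "k = k'"
proof -
  have "(b \<circ> xp k) (1/4) = u k" using B_fix_u[OF assms(1)] unfolding u_def by simp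
  moreover have "(b' \<circ> xp k') (1/4) = u k'" using B_fix_u[OF assms(2)] unfolding u_def by simp
  ultimately show ?thesis using assms(3) u_inj by metis
qed

lemma xp_inj: "xp k = xp k' \<Longrightarrow> k = k'"
  using u_inj unfolding u_def by metis

definition cj :: "int \<Rightarrow> (real \<Rightarrow> real) \<Rightarrow> real \<Rightarrow> real" where
  "cj k b = xp k \<circ> b \<circ> xp (- k)"

lemma xp_cancel_comp: "xp (- k) \<circ> xp k = id" "xp k \<circ> xp (- k) = id"
  by (auto simp: fun_eq_iff xp_cancel xp_cancel2)

lemma cj_hom: "group_hom GF GF (cj k)"
  unfolding group_hom_def group_hom_axioms_def
proof (intro conjI)
  show "group GF" by (rule group_GF)
  show "cj k \<in> hom GF GF"
    unfolding hom_def
  proof (intro CollectI conjI ballI)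
    show "cj k \<in> carrier GF \<rightarrow> carrier GF" unfolding cj_def by (auto intro!: Fset_comp)
    fix x y assume "x \<in> carrier GF" "y \<in> carrier GF"
    have "cj k (x \<circ> y) = xp k \<circ> x \<circ> (xp (- k) \<circ> xp k) \<circ> y \<circ> xp (- k)"
      unfolding cj_def xp_cancel_comp by (simp add: comp_assoc)
    then show "cj k (x \<otimes>\<^bsub>GF\<^esub> y) = cj k x \<otimes>\<^bsub>GF\<^esub> cj k y" unfolding cj_def by (simp add: comp_assoc)
  qed
qed (rule group_GF)

lemma cj_aj: "cj k (aj j) = aj (k + j)"
proof -
  have "cj k (aj j) = (xp k \<circ> xp j) \<circ> a0 \<circ> (xp (- j) \<circ> xp (- k))"
    unfolding cj_def aj_def by (simp add: comp_assoc)
  also have "\<dots> = aj (k + j)" unfolding aj_def xp_add[symmetric] by (simp add: add.commute)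
  finally show ?thesis .
qed

lemma cj_B: assumes "b \<in> Bgrp" shows "cj k b \<in> Bgrp"
proof -
  have "cj k ` Bgrp = generate GF (cj k ` range aj)"
    unfolding Bgrp_def using group_hom.generate_img[OF cj_hom range_aj_carrier] by simp
  also have "\<dots> \<subseteq> generate GF (range aj)"
    by (rule GFG.mono_generate) (auto simp: cj_aj)
  finally show ?thesis using assms unfolding Bgrp_def by auto
qed

section \<open>B is not finitely generated\<close>

definition BN :: "nat \<Rightarrow> (real \<Rightarrow> real) set" where
  "BN N = generate GF (aj ` {- int N..int N})"

lemma BN_subgroup: "subgroup (BN N) GF"
  unfolding BN_def by (rule GFG.generate_is_subgroup) (use aj_Fset in auto)

lemma BN_mono: "N \<le> M \<Longrightarrow> BN N \<subseteq> BN M"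
  unfolding BN_def by (rule GFG.mono_generate) auto

lemma aj_BN: "aj j \<in> BN (nat \<bar>j\<bar>)"
  unfolding BN_def by (rule generate.incl, rule imageI) auto

lemma BN_B: "BN N \<subseteq> Bgrp"
  unfolding BN_def Bgrp_def by (rule GFG.mono_generate) auto

lemma B_union: "Bgrp = (\<Union>N. BN N)"
proof
  show "(\<Union>N. BN N) \<subseteq> Bgrp" using BN_B by auto
  have "subgroup (\<Union>N. BN N) GF"
  proof (rule subgroupGF_I)
    show "(\<Union>N. BN N) \<subseteq> Fset" using BN_B B_Fset by blast
    show "id \<in> (\<Union>N. BN N)" using subgroup.one_closed[OF BN_subgroup[of 0]] by auto
    fix f g assume "f \<in> (\<Union>N. BN N)" "g \<in> (\<Union>N. BN N)"
    then obtain N M where "f \<in> BN N" "g \<in> BN M" by auto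
    then have "f \<in> BN (max N M)" "g \<in> BN (max N M)" using BN_mono[of N "max N M"] BN_mono[of M "max N M"] by auto
    then have "f \<otimes>\<^bsub>GF\<^esub> g \<in> BN (max N M)" using subgroup.m_closed[OF BN_subgroup] by blast
    then show "f \<circ> g \<in> (\<Union>N. BN N)" by auto
  next
    fix f assume "f \<in> (\<Union>N. BN N)"
    then obtain N where "f \<in> BN N" by auto
    then have "inv\<^bsub>GF\<^esub> f \<in> BN N" using subgroup.m_inv_closed[OF BN_subgroup] by blast
    moreover have "f \<in> Fset" using \<open>f \<in> BN N\<close> BN_B B_Fset by blast
    ultimately show "finv f \<in> (\<Union>N. BN N)" by auto
  qed
  moreover have "range aj \<subseteq> (\<Union>N. BN N)" using aj_BN by blast
  ultimately show "Bgrp \<subseteq> (\<Union>N. BN N)" unfolding Bgrp_def by (rule GFG.generate_subgroup_incl[rotated])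
qed

lemma finite_in_BN: "finite S \<Longrightarrow> S \<subseteq> (\<Union>N. BN N) \<Longrightarrow> \<exists>N. S \<subseteq> BN N"
proof (induction S rule: finite_induct)
  case empty then show ?case by auto
next
  case (insert s S)
  then obtain N where N: "S \<subseteq> BN N" by auto
  obtain M where M: "s \<in> BN M" using insert by auto
  show ?case using N M BN_mono[of N "max N M"] BN_mono[of M "max N M"] by (intro exI[of _ "max N M"]) auto
qed

lemma BN_fix: "f \<in> BN N \<Longrightarrow> u (int N + 1) \<le> x \<Longrightarrow> x < u (int N + 2) \<Longrightarrow> f x = x"
proof -
  define Fx where "Fx = {f \<in> Fset. \<forall>x. u (int N + 1) \<le> x \<and> x < u (int N + 2) \<longrightarrow> f x = x}"
  have "subgroup Fx GF"
  proof (rule subgroupGF_I)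
    show "Fx \<subseteq> Fset" unfolding Fx_def by auto
    show "id \<in> Fx" unfolding Fx_def using Fset_id by auto
    show "\<And>f g. f \<in> Fx \<Longrightarrow> g \<in> Fx \<Longrightarrow> f \<circ> g \<in> Fx" unfolding Fx_def using Fset_comp by auto
    show "\<And>f. f \<in> Fx \<Longrightarrow> finv f \<in> Fx" unfolding Fx_def using Fset_inv finv_fix by auto
  qed
  moreover have "aj ` {- int N..int N} \<subseteq> Fx"
  proof
    fix g assume "g \<in> aj ` {- int N..int N}"
    then obtain j where j: "j \<in> {- int N..int N}" "g = aj j" by auto
    have "u (j + 1) \<le> u (int N + 1)" using j u_le_iff by auto
    then show "g \<in> Fx" unfolding Fx_def using j aj_Fset aj_out by auto
  qed
  ultimately have "BN N \<subseteq> Fx" unfolding BN_def by (rule GFG.generate_subgroup_incl[rotated])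
  then show "f \<in> BN N \<Longrightarrow> u (int N + 1) \<le> x \<Longrightarrow> x < u (int N + 2) \<Longrightarrow> f x = x" unfolding Fx_def by auto
qed

lemma B_not_fg: "\<not> fin_gen_subgroup GF Bgrp"
proof
  assume "fin_gen_subgroup GF Bgrp"
  then obtain S where S: "finite S" "S \<subseteq> carrier GF" "Bgrp = generate GF S"
    unfolding fin_gen_subgroup_def by blast
  have "S \<subseteq> Bgrp" using S(3) generate.incl[of _ S GF] by blast
  then obtain N where N: "S \<subseteq> BN N" using finite_in_BN[OF S(1)] B_union by auto
  have "Bgrp \<subseteq> BN N" using S(3) GFG.generate_subgroup_incl[OF N BN_subgroup] by simp
  then have "aj (int N + 1) \<in> BN N" using aj_B by auto
  moreover obtain x where "u (int N + 1) \<le> x" "x < u (int N + 1 + 1)" "aj (int N + 1) x \<noteq> x"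
    using aj_moves by blast
  ultimately show False using BN_fix[of "aj (int N + 1)" N x] by (simp add: add.assoc)
qed


section \<open>Restricted direct sum of copies of F\<close>

type_synonym idx = "nat \<times> nat"

abbreviation DS :: "(idx \<Rightarrow> real \<Rightarrow> real) monoid" where
  "DS \<equiv> sum_group (UNIV :: idx set) (\<lambda>_. GF)"

lemma DS_group: "group DS" by (rule sum_group) (rule group_GF)

interpretation DSG: group DS by (rule DS_group)

lemma DS_carrier: "carrier DS = {\<phi>. (\<forall>q. \<phi> q \<in> Fset) \<and> finite {q. \<phi> q \<noteq> id}}"
  using carrier_sum_group[of "UNIV :: idx set" "\<lambda>_. GF"] group_GF by (auto simp: PiE_UNIV_domain Pi_def)

lemma DS_carrierI: "(\<And>q. \<phi> q \<in> Fset) \<Longrightarrow> finite {q. \<phi> q \<noteq> id} \<Longrightarrow> \<phi> \<in> carrier DS"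
  unfolding DS_carrier by auto

lemma DS_carrierD: "\<phi> \<in> carrier DS \<Longrightarrow> \<phi> q \<in> Fset"
  unfolding DS_carrier mem_Collect_eq by blast

lemma DS_carrier_fin: "\<phi> \<in> carrier DS \<Longrightarrow> finite {q. \<phi> q \<noteq> id}"
  unfolding DS_carrier by auto

lemma DS_mult [simp]: "\<phi> \<otimes>\<^bsub>DS\<^esub> \<psi> = (\<lambda>q. \<phi> q \<circ> \<psi> q)"
  by (simp add: restrict_UNIV)

lemma DS_one [simp]: "\<one>\<^bsub>DS\<^esub> = (\<lambda>q. id)"
  by (simp add: restrict_UNIV)

lemma DS_inv: "\<phi> \<in> carrier DS \<Longrightarrow> inv\<^bsub>DS\<^esub> \<phi> = (\<lambda>q. finv (\<phi> q))"
  using inv_sum_group[of "UNIV :: idx set" "\<lambda>_. GF" \<phi>] group_GF DS_carrierD by (simp add: restrict_UNIV)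

lemma DS_eval_hom: "group_hom DS GF (\<lambda>\<phi>. \<phi> q)"
  unfolding group_hom_def group_hom_axioms_def hom_def
  using DS_group group_GF DS_carrierD by auto

lemma DS_pow: "\<phi> \<in> carrier DS \<Longrightarrow> (\<phi> [^]\<^bsub>DS\<^esub> (k::int)) q = (\<phi> q) [^]\<^bsub>GF\<^esub> k"
  using group_hom.hom_int_pow[OF DS_eval_hom] by blast

definition lo :: "nat \<Rightarrow> real" where "lo n = 1 - 1 / 2 ^ n"
definition len :: "nat \<Rightarrow> real" where "len n = 1 / 2 ^ Suc n"

lemma lo_Suc: "lo (Suc n) = lo n + len n" unfolding lo_def len_def by (simp add: field_simps)
lemma len_pos: "len n > 0" unfolding len_def by simp
lemma lo_0: "lo 0 = 0" unfolding lo_def by simp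
lemma lo_ge0: "lo n \<ge> 0" unfolding lo_def by simp
lemma lo_less1: "lo n < 1" unfolding lo_def by simp
lemma lo_mono: "m < n \<Longrightarrow> lo m < lo n"
  unfolding lo_def by (simp add: divide_strict_left_mono)
lemma lo_le_iff: "lo m \<le> lo n \<longleftrightarrow> m \<le> n"
  by (metis lo_mono not_le order_less_imp_le linorder_neqE order.refl)

lemma exists_slot: assumes "x < 1" shows "\<exists>n. x < lo n"
proof -
  obtain n where "(1/2::real) ^ n < 1 - x" using real_arch_pow_inv[of "1 - x" "1/2"] assms by auto
  then have "x < 1 - 1 / 2 ^ n" by (simp add: power_one_over)
  then show ?thesis unfolding lo_def by blast
qed

definition slot :: "real \<Rightarrow> nat" where "slot x = (LEAST n. x < lo (Suc n))"

lemma slot_props: assumes "0 \<le> x" "x < 1" shows "lo (slot x) \<le> x \<and> x < lo (Suc (slot x))"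
proof -
  obtain n where n: "x < lo n" using exists_slot[OF assms(2)] by blast
  have "n \<noteq> 0"
  proof
    assume "n = 0" then show False using n assms lo_0 by simp
  qed
  then have ex: "x < lo (Suc (n - 1))" using n by simp
  have 1: "x < lo (Suc (slot x))" unfolding slot_def by (rule LeastI[of "\<lambda>n. x < lo (Suc n)", OF ex])
  have 2: "lo (slot x) \<le> x"
  proof (cases "slot x")
    case 0 then show ?thesis using lo_0 assms by simp
  next
    case (Suc m)
    then have "\<not> x < lo (Suc m)" using not_less_Least[of m "\<lambda>n. x < lo (Suc n)"] unfolding slot_def by auto
    then show ?thesis using Suc by simp
  qed
  show ?thesis using 1 2 by simp
qed

lemma slot_unique: assumes "lo m \<le> x" "x < lo (Suc m)" shows "slot x = m"
proof -
  have x: "0 \<le> x" "x < 1" using assms lo_ge0[of m] lo_less1[of "Suc m"] by linarith+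
  have s: "lo (slot x) \<le> x" "x < lo (Suc (slot x))" using slot_props[OF x] by auto
  show ?thesis
  proof (rule ccontr)
    assume "slot x \<noteq> m"
    then have "slot x < m \<or> m < slot x" by auto
    then show False
    proof
      assume "slot x < m" then have "lo (Suc (slot x)) \<le> lo m" using lo_le_iff by auto
      then show False using s assms by auto
    next
      assume "m < slot x" then have "lo (Suc m) \<le> lo (slot x)" using lo_le_iff by auto
      then show False using s assms by auto
    qed
  qed
qed

definition plc :: "nat \<Rightarrow> (real \<Rightarrow> real) \<Rightarrow> real \<Rightarrow> real" where
  "plc m g = place (lo m) (len m) g"

lemma plc_out: "x < lo m \<or> lo (Suc m) \<le> x \<Longrightarrow> plc m g x = x"
  unfolding plc_def place_def lo_Suc by auto

lemma plc_in_slot: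
  assumes "g \<in> Fset" "lo m \<le> x" "x < lo (Suc m)"
  shows "lo m \<le> plc m g x \<and> plc m g x < lo (Suc m)"
proof -
  have "(x - lo m) / len m \<in> {0..<1}" using assms len_pos[of m] unfolding lo_Suc by (auto simp: field_simps)
  then have "g ((x - lo m) / len m) \<in> {0..<1}" using Fset_maps[OF assms(1)] by blast
  then show ?thesis using assms len_pos[of m] unfolding plc_def place_def lo_Suc by (auto simp: field_simps)
qed

lemma plc_Fset: assumes "g \<in> Fset" shows "plc m g \<in> Fset"
  unfolding plc_def
proof (rule place_Fset[OF assms, where e = "- int (Suc m)"])
  have "lo m = of_int (2 ^ m - 1) / 2 ^ m" unfolding lo_def by (simp add: field_simps)
  then show "dyadic (lo m)" unfolding dyadic_def by blast
  show "0 \<le> lo m" by (rule lo_ge0)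
  show "len m = p2 (- int (Suc m))" unfolding len_def p2_def
    by (subst powr_int) (auto simp: nat_add_distrib)
  show "lo m + len m \<le> 1" using lo_less1[of "Suc m"] unfolding lo_Suc by simp
qed

definition glue :: "(idx \<Rightarrow> real \<Rightarrow> real) \<Rightarrow> real \<Rightarrow> real" where
  "glue \<phi> x = (if 0 \<le> x \<and> x < 1 then plc (slot x) (\<phi> (prod_decode (slot x))) x else x)"

lemma glue_slot: assumes "lo m \<le> x" "x < lo (Suc m)" shows "glue \<phi> x = plc m (\<phi> (prod_decode m)) x"
proof -
  have x: "0 \<le> x" "x < 1" using assms lo_ge0[of m] lo_less1[of "Suc m"] by linarith+
  then show ?thesis unfolding glue_def using slot_unique[OF assms] by simp
qed

lemma glue_out: assumes "\<not> (0 \<le> x \<and> x < 1)" shows "glue \<phi> x = x"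
  using assms unfolding glue_def by auto

lemma glue_comp:
  assumes "\<And>q. \<phi> q \<in> Fset" "\<And>q. \<psi> q \<in> Fset"
  shows "glue \<phi> \<circ> glue \<psi> = glue (\<lambda>q. \<phi> q \<circ> \<psi> q)"
proof
  fix x
  show "(glue \<phi> \<circ> glue \<psi>) x = glue (\<lambda>q. \<phi> q \<circ> \<psi> q) x"
  proof (cases "0 \<le> x \<and> x < 1")
    case True
    define m where "m = slot x"
    have s: "lo m \<le> x" "x < lo (Suc m)" using slot_props True unfolding m_def by auto
    have g1: "glue \<psi> x = plc m (\<psi> (prod_decode m)) x" using glue_slot[OF s] .
    have s2: "lo m \<le> glue \<psi> x" "glue \<psi> x < lo (Suc m)" using plc_in_slot[OF assms(2) s] g1 by auto
    have "glue \<phi> (glue \<psi> x) = plc m (\<phi> (prod_decode m)) (plc m (\<psi> (prod_decode m)) x)"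
      using glue_slot[OF s2] g1 by simp
    also have "\<dots> = plc m (\<phi> (prod_decode m) \<circ> \<psi> (prod_decode m)) x"
      unfolding plc_def using place_comp[OF assms(1) assms(2) len_pos] by (metis comp_apply)
    also have "\<dots> = glue (\<lambda>q. \<phi> q \<circ> \<psi> q) x" using glue_slot[OF s] by simp
    finally show ?thesis by simp
  next
    case False then show ?thesis using glue_out by simp
  qed
qed

lemma glue_id: "glue (\<lambda>q. id) = id"
  unfolding glue_def plc_def place_id by (auto simp: fun_eq_iff)

lemma glue_single: "glue (\<lambda>q. if q = q0 then g else id) = plc (prod_encode q0) g"
proof
  fix x
  show "glue (\<lambda>q. if q = q0 then g else id) x = plc (prod_encode q0) g x"
  proof (cases "0 \<le> x \<and> x < 1")
    case True
    define m where "m = slot x"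
    have s: "lo m \<le> x" "x < lo (Suc m)" using slot_props True unfolding m_def by auto
    show ?thesis
    proof (cases "m = prod_encode q0")
      case True then show ?thesis using glue_slot[OF s] by simp
    next
      case False
      then have "prod_decode m \<noteq> q0" by auto
      then have "glue (\<lambda>q. if q = q0 then g else id) x = x" using glue_slot[OF s] plc_def place_id by simp
      moreover have "x < lo (prod_encode q0) \<or> lo (Suc (prod_encode q0)) \<le> x"
      proof (cases "m < prod_encode q0")
        case True then have "lo (Suc m) \<le> lo (prod_encode q0)" using lo_le_iff by auto
        then show ?thesis using s by auto
      next
        case False then have "Suc (prod_encode q0) \<le> m" using \<open>m \<noteq> prod_encode q0\<close> by auto
        then have "lo (Suc (prod_encode q0)) \<le> lo m" using lo_le_iff by auto
        then show ?thesis using s by auto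
      qed
      ultimately show ?thesis using plc_out by simp
    qed
  next
    case False
    then have "x < lo (prod_encode q0) \<or> lo (Suc (prod_encode q0)) \<le> x"
      using lo_ge0[of "prod_encode q0"] lo_less1[of "Suc (prod_encode q0)"] by auto
    then show ?thesis using glue_out[OF False] plc_out by simp
  qed
qed

lemma glue_Fset_aux:
  assumes "finite F"
  shows "\<forall>\<phi>. (\<forall>q. \<phi> q \<in> Fset) \<and> {q. \<phi> q \<noteq> id} \<subseteq> F \<longrightarrow> glue \<phi> \<in> Fset"
  using assms
proof (induction F rule: finite_induct)
  case empty
  show ?case
  proof (intro allI impI)
    fix \<phi> :: "idx \<Rightarrow> real \<Rightarrow> real" assume "(\<forall>q. \<phi> q \<in> Fset) \<and> {q. \<phi> q \<noteq> id} \<subseteq> {}"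
    then have "\<phi> = (\<lambda>q. id)" by auto
    then show "glue \<phi> \<in> Fset" using glue_id Fset_id by simp
  qed
next
  case (insert q0 F)
  show ?case
  proof (intro allI impI)
    fix \<phi> :: "idx \<Rightarrow> real \<Rightarrow> real" assume a: "(\<forall>q. \<phi> q \<in> Fset) \<and> {q. \<phi> q \<noteq> id} \<subseteq> insert q0 F"
    define \<phi>1 where "\<phi>1 = (\<lambda>q. if q = q0 then \<phi> q0 else id)"
    define \<phi>2 where "\<phi>2 = \<phi>(q0 := id)"
    have f1: "\<forall>q. \<phi>1 q \<in> Fset" unfolding \<phi>1_def using a Fset_id by auto
    have f2: "\<forall>q. \<phi>2 q \<in> Fset" unfolding \<phi>2_def using a Fset_id by auto
    have "{q. \<phi>2 q \<noteq> id} \<subseteq> F" using a unfolding \<phi>2_def by auto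
    then have g2: "glue \<phi>2 \<in> Fset" using insert.IH f2 by blast
    have "\<phi> = (\<lambda>q. \<phi>1 q \<circ> \<phi>2 q)" unfolding \<phi>1_def \<phi>2_def by (auto simp: fun_eq_iff)
    then have "glue \<phi> = glue \<phi>1 \<circ> glue \<phi>2" using glue_comp[of \<phi>1 \<phi>2] f1 f2 by simp
    moreover have "glue \<phi>1 = plc (prod_encode q0) (\<phi> q0)" unfolding \<phi>1_def by (rule glue_single)
    moreover have "\<phi> q0 \<in> Fset" using a by blast
    ultimately show "glue \<phi> \<in> Fset" using Fset_comp[OF plc_Fset g2] by simp
  qed
qed

lemma glue_Fset: assumes "\<phi> \<in> carrier DS" shows "glue \<phi> \<in> Fset"
proof -
  have "(\<forall>q. \<phi> q \<in> Fset) \<and> {q. \<phi> q \<noteq> id} \<subseteq> {q. \<phi> q \<noteq> id}" using DS_carrierD[OF assms] by auto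
  then show ?thesis by (rule glue_Fset_aux[OF DS_carrier_fin[OF assms], rule_format])
qed

lemma glue_inj:
  assumes "\<And>q. \<phi> q \<in> Fset" "\<And>q. \<psi> q \<in> Fset" "glue \<phi> = glue \<psi>"
  shows "\<phi> = \<psi>"
proof
  fix q
  define m where "m = prod_encode q"
  show "\<phi> q = \<psi> q"
  proof
    fix y
    show "\<phi> q y = \<psi> q y"
    proof (cases "0 \<le> y \<and> y < 1")
      case True
      define x where "x = lo m + len m * y"
      have s: "lo m \<le> x" "x < lo (Suc m)" unfolding x_def lo_Suc using True len_pos[of m] by auto
      have xy: "(x - lo m) / len m = y" unfolding x_def using len_pos[of m] by simp
      have "glue \<phi> x = lo m + len m * \<phi> q y" using glue_slot[OF s] s xy unfolding plc_def place_def lo_Suc m_def by simp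
      moreover have "glue \<psi> x = lo m + len m * \<psi> q y" using glue_slot[OF s] s xy unfolding plc_def place_def lo_Suc m_def by simp
      ultimately show ?thesis using assms(3) len_pos[of m] by simp
    next
      case False then show ?thesis using Fset_D(2)[OF assms(1)] Fset_D(2)[OF assms(2)] by simp
    qed
  qed
qed

lemma glue_hom: "group_hom DS GF glue"
  unfolding group_hom_def group_hom_axioms_def hom_def
proof (intro conjI CollectI ballI)
  show "glue \<in> carrier DS \<rightarrow> carrier GF" using glue_Fset by auto
  fix x y assume "x \<in> carrier DS" "y \<in> carrier DS"
  then show "glue (x \<otimes>\<^bsub>DS\<^esub> y) = glue x \<otimes>\<^bsub>GF\<^esub> glue y" using glue_comp DS_carrierD by (simp add: restrict_UNIV)
qed (auto simp: DS_group group_GF)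

lemma glue_inj_on: "inj_on glue (carrier DS)"
  by (rule inj_onI) (use glue_inj DS_carrierD in blast)

section \<open>Transfer of realisability along an injective homomorphism\<close>

lemma realisable_inj_hom:
  assumes hom: "group_hom GG HH hm" and inj: "inj_on hm (carrier GG)" and r: "realisable GG n c"
  shows "realisable HH n c"
proof -
  interpret hh: group_hom GG HH hm by (rule hom)
  obtain Xs where Xs: "\<forall>i\<in>{1..n}. subgroup (Xs i) GG"
    "\<forall>I. I \<noteq> {} \<and> I \<subseteq> {1..n} \<longrightarrow> (fin_gen_subgroup GG (\<Inter>i\<in>I. Xs i) \<longleftrightarrow> c I = 0)"
    using r unfolding realisable_def by blast
  have sub: "\<forall>i\<in>{1..n}. subgroup (hm ` Xs i) HH" using Xs(1) hh.subgroup_img_is_subgroup by blast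
  have fg: "fin_gen_subgroup HH (hm ` Y) \<longleftrightarrow> fin_gen_subgroup GG Y" if Y: "Y \<subseteq> carrier GG" for Y
  proof
    assume "fin_gen_subgroup GG Y"
    then obtain S where S: "finite S" "S \<subseteq> carrier GG" "Y = generate GG S" unfolding fin_gen_subgroup_def by blast
    have "hm ` Y = generate HH (hm ` S)" using hh.generate_img[OF S(2)] S(3) by simp
    moreover have "hm ` S \<subseteq> carrier HH" using S(2) by auto
    ultimately show "fin_gen_subgroup HH (hm ` Y)" unfolding fin_gen_subgroup_def using S(1) by blast
  next
    assume "fin_gen_subgroup HH (hm ` Y)"
    then obtain T where T: "finite T" "T \<subseteq> carrier HH" "hm ` Y = generate HH T" unfolding fin_gen_subgroup_def by blast
    have "T \<subseteq> hm ` Y" using T(3) generate.incl[of _ T HH] by blast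
    define S where "S = inv_into Y hm ` T"
    have SY: "S \<subseteq> Y" unfolding S_def using \<open>T \<subseteq> hm ` Y\<close> by (auto intro: inv_into_into)
    have hS: "hm ` S = T" unfolding S_def using \<open>T \<subseteq> hm ` Y\<close> by (auto simp: image_image f_inv_into_f) (metis f_inv_into_f image_eqI subsetD)
    have SG: "S \<subseteq> carrier GG" using SY Y by auto
    have "hm ` generate GG S = hm ` Y" using hh.generate_img[OF SG] hS T(3) by simp
    moreover have "generate GG S \<subseteq> carrier GG" using hh.G.generate_incl[OF SG] .
    ultimately have "generate GG S = Y" using inj Y by (simp add: inj_on_image_eq_iff)
    then show "fin_gen_subgroup GG Y" unfolding fin_gen_subgroup_def using SG T(1) S_def by auto
  qed
  have "\<forall>I. I \<noteq> {} \<and> I \<subseteq> {1..n} \<longrightarrow> (fin_gen_subgroup HH (\<Inter>i\<in>I. hm ` Xs i) \<longleftrightarrow> c I = 0)"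
  proof (intro allI impI)
    fix I assume I: "I \<noteq> {} \<and> I \<subseteq> {1..n}"
    have Xc: "\<forall>i\<in>I. Xs i \<subseteq> carrier GG" using Xs(1) I subgroup.subset by blast
    have "(\<Inter>i\<in>I. hm ` Xs i) = hm ` (\<Inter>i\<in>I. Xs i)"
    proof
      show "hm ` (\<Inter>i\<in>I. Xs i) \<subseteq> (\<Inter>i\<in>I. hm ` Xs i)" by auto
      show "(\<Inter>i\<in>I. hm ` Xs i) \<subseteq> hm ` (\<Inter>i\<in>I. Xs i)"
      proof
        fix y assume y: "y \<in> (\<Inter>i\<in>I. hm ` Xs i)"
        obtain i0 where i0: "i0 \<in> I" using I by auto
        then obtain x where x: "x \<in> Xs i0" "y = hm x" using y by auto
        have "x \<in> Xs i" if i: "i \<in> I" for i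
        proof -
          obtain x' where x': "x' \<in> Xs i" "y = hm x'" using y i by auto
          then have "x = x'" using inj x Xc i i0 by (metis inj_onD subsetD)
          then show ?thesis using x' by simp
        qed
        then show "y \<in> hm ` (\<Inter>i\<in>I. Xs i)" using x by auto
      qed
    qed
    moreover have "(\<Inter>i\<in>I. Xs i) \<subseteq> carrier GG" using Xc I by auto
    ultimately show "fin_gen_subgroup HH (\<Inter>i\<in>I. hm ` Xs i) \<longleftrightarrow> c I = 0" using fg Xs(2) I by simp
  qed
  then show ?thesis unfolding realisable_def
    by (intro exI[of _ "\<lambda>i. hm ` Xs i"] conjI) (use sub in simp_all)
qed


section \<open>Gadget algebra\<close>

lemma finv_comp: "f \<in> Fset \<Longrightarrow> g \<in> Fset \<Longrightarrow> finv (f \<circ> g) = finv g \<circ> finv f"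
  unfolding finv_def using o_inv_distrib[OF Fset_bij Fset_bij] by simp

lemma finv_id: "finv id = id" unfolding finv_def by (simp add: inv_id)

lemma xp_pow: "(xp k) [^]\<^bsub>GF\<^esub> (e::int) = xp (k * e)"
  unfolding xp_def using GFG.int_pow_pow[OF x0_carrier] by simp

lemma id_pow: "id [^]\<^bsub>GF\<^esub> (e::int) = id"
  using GFG.int_pow_one by simp

lemma cj_id: "cj k id = id"
  unfolding cj_def using xp_cancel_comp by simp

lemma cj_0: "b \<in> Fset \<Longrightarrow> cj 0 b = b"
  unfolding cj_def by simp

lemma xp_cancel_left: "xp (- k) \<circ> (xp k \<circ> f) = f"
  by (simp add: fun_eq_iff xp_cancel)

definition gad :: "nat set \<Rightarrow> (real \<Rightarrow> real) \<Rightarrow> int \<Rightarrow> (nat \<Rightarrow> int) \<Rightarrow> nat \<Rightarrow> real \<Rightarrow> real" where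
  "gad J b k v j = (if j = 0 then b \<circ> xp k else if j - 1 \<in> J - {Max J} then xp (v (j - 1)) else id)"

lemma gad_0 [simp]: "gad J b k v 0 = b \<circ> xp k" unfolding gad_def by simp
lemma gad_Suc [simp]: "gad J b k v (Suc l) = (if l \<in> J - {Max J} then xp (v l) else id)"
  unfolding gad_def by simp

lemma gad_Fset: "b \<in> Fset \<Longrightarrow> gad J b k v j \<in> Fset"
  unfolding gad_def using Fset_comp Fset_id by auto

lemma gad_fin: assumes "finite J" shows "finite {j. gad J b k v j \<noteq> id}"
proof -
  have "{j. gad J b k v j \<noteq> id} \<subseteq> insert 0 (Suc ` J)"
  proof
    fix j assume j: "j \<in> {j. gad J b k v j \<noteq> id}"
    show "j \<in> insert 0 (Suc ` J)"
    proof (cases j)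
      case (Suc l) then show ?thesis using j by (auto split: if_splits)
    qed simp
  qed
  then show ?thesis using assms by (meson finite_imageI finite_insert finite_subset)
qed

lemma gad_mult:
  assumes "b \<in> Fset" "b' \<in> Fset"
  shows "(\<lambda>j. gad J b k v j \<circ> gad J b' k' v' j) = gad J (b \<circ> cj k b') (k + k') (\<lambda>l. v l + v' l)"
proof
  fix j show "gad J b k v j \<circ> gad J b' k' v' j = gad J (b \<circ> cj k b') (k + k') (\<lambda>l. v l + v' l) j"
  proof (cases j)
    case 0
    have "b \<circ> xp k \<circ> (b' \<circ> xp k') = b \<circ> (xp k \<circ> b' \<circ> xp (- k)) \<circ> (xp k \<circ> xp k')"
      by (simp add: comp_assoc xp_cancel_left)
    then show ?thesis using 0 unfolding cj_def by (simp add: xp_add)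
  next
    case (Suc l) then show ?thesis by (simp add: xp_add)
  qed
qed

lemma gad_inv:
  assumes "b \<in> Fset"
  shows "(\<lambda>j. finv (gad J b k v j)) = gad J (cj (- k) (finv b)) (- k) (\<lambda>l. - v l)"
proof
  fix j show "finv (gad J b k v j) = gad J (cj (- k) (finv b)) (- k) (\<lambda>l. - v l) j"
  proof (cases j)
    case 0
    have "finv (b \<circ> xp k) = xp (- k) \<circ> finv b" using finv_comp[OF assms xp_Fset] xp_neg by simp
    also have "\<dots> = xp (- k) \<circ> finv b \<circ> (xp k \<circ> xp (- k))" using xp_cancel_comp(2)[of k] by simp
    finally show ?thesis using 0 unfolding cj_def by (simp add: comp_assoc)
  next
    case (Suc l) then show ?thesis using xp_neg finv_id by simp
  qed
qed

lemma gad_pow: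
  "(\<lambda>j. (gad J id k v j) [^]\<^bsub>GF\<^esub> (e::int)) = gad J id (k * e) (\<lambda>l. v l * e)"
proof
  fix j show "(gad J id k v j) [^]\<^bsub>GF\<^esub> e = gad J id (k * e) (\<lambda>l. v l * e) j"
    by (cases j) (auto simp: xp_pow id_pow)
qed

lemma gad_trivial: "gad J id 0 (\<lambda>l. 0) = (\<lambda>j. id)"
proof
  fix j show "gad J id 0 (\<lambda>l. 0) j = id" by (cases j) auto
qed

lemma gad_zero_on: "(\<forall>l\<in>J - {Max J}. v l = 0) \<Longrightarrow> gad J id 0 v = (\<lambda>j. id)"
proof
  fix j assume "\<forall>l\<in>J - {Max J}. v l = 0"
  then show "gad J id 0 v j = id" by (cases j) auto
qed

lemma gad_unique:
  assumes "b \<in> Bgrp" "b' \<in> Bgrp" "gad J b k v = gad J b' k' v'"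
  shows "k = k' \<and> b = b' \<and> (\<forall>l\<in>J - {Max J}. v l = v' l)"
proof -
  have e0: "b \<circ> xp k = b' \<circ> xp k'" using fun_cong[OF assms(3), of 0] by simp
  then have kk: "k = k'" using B_xp_unique[OF assms(1,2)] by blast
  have "b = b \<circ> xp k \<circ> xp (- k)" using xp_cancel_comp(2)[of k] by (simp add: comp_assoc)
  also have "\<dots> = b'" using e0 kk xp_cancel_comp(2)[of k'] by (simp add: comp_assoc)
  finally have bb: "b = b'" .
  have "v l = v' l" if l: "l \<in> J - {Max J}" for l
    using fun_cong[OF assms(3), of "Suc l"] l xp_inj by simp
  then show ?thesis using kk bb by blast
qed

definition blk :: "nat set \<Rightarrow> (nat \<Rightarrow> real \<Rightarrow> real) \<Rightarrow> idx \<Rightarrow> real \<Rightarrow> real" where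
  "blk J \<psi> = (\<lambda>q. if fst q = set_encode J then \<psi> (snd q) else id)"

lemma blk_carrier:
  assumes "\<And>j. \<psi> j \<in> Fset" "finite {j. \<psi> j \<noteq> id}"
  shows "blk J \<psi> \<in> carrier DS"
proof (rule DS_carrierI)
  show "blk J \<psi> q \<in> Fset" for q unfolding blk_def using assms(1) Fset_id by auto
  have "{q. blk J \<psi> q \<noteq> id} \<subseteq> (\<lambda>j. (set_encode J, j)) ` {j. \<psi> j \<noteq> id}"
    unfolding blk_def by (auto split: if_splits)
  then show "finite {q. blk J \<psi> q \<noteq> id}" using assms(2) by (meson finite_imageI finite_subset)
qed

lemma blk_gad_carrier: "b \<in> Fset \<Longrightarrow> finite J \<Longrightarrow> blk J (gad J b k v) \<in> carrier DS"
  by (rule blk_carrier) (auto intro: gad_Fset gad_fin)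

lemma blk_mult: "blk J \<psi> \<otimes>\<^bsub>DS\<^esub> blk J \<psi>' = blk J (\<lambda>j. \<psi> j \<circ> \<psi>' j)"
  unfolding blk_def by (auto simp: fun_eq_iff)

lemma blk_pow: assumes "blk J \<psi> \<in> carrier DS"
  shows "blk J \<psi> [^]\<^bsub>DS\<^esub> (e::int) = blk J (\<lambda>j. \<psi> j [^]\<^bsub>GF\<^esub> e)"
proof
  fix q show "(blk J \<psi> [^]\<^bsub>DS\<^esub> e) q = blk J (\<lambda>j. \<psi> j [^]\<^bsub>GF\<^esub> e) q"
    using DS_pow[OF assms, of e q] id_pow unfolding blk_def by (auto split: if_splits)
qed

lemma blk_trivial: "blk J (\<lambda>j. id) = \<one>\<^bsub>DS\<^esub>"
  unfolding blk_def by (auto simp: fun_eq_iff)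

definition dlt :: "idx \<Rightarrow> (real \<Rightarrow> real) \<Rightarrow> idx \<Rightarrow> real \<Rightarrow> real" where
  "dlt q0 g = (\<lambda>q. if q = q0 then g else id)"

lemma dlt_carrier: "g \<in> Fset \<Longrightarrow> dlt q0 g \<in> carrier DS"
proof (rule DS_carrierI)
  fix q assume "g \<in> Fset" then show "dlt q0 g q \<in> Fset" unfolding dlt_def using Fset_id by auto
next
  have "{q. dlt q0 g q \<noteq> id} \<subseteq> {q0}" unfolding dlt_def by auto
  then show "finite {q. dlt q0 g q \<noteq> id}" using finite_subset by blast
qed

lemma dlt_hom: "group_hom GF DS (dlt q0)"
  unfolding group_hom_def group_hom_axioms_def hom_def
proof (intro conjI CollectI ballI)
  show "dlt q0 \<in> carrier GF \<rightarrow> carrier DS" using dlt_carrier by auto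
  fix x y assume "x \<in> carrier GF" "y \<in> carrier GF"
  show "dlt q0 (x \<otimes>\<^bsub>GF\<^esub> y) = dlt q0 x \<otimes>\<^bsub>DS\<^esub> dlt q0 y" unfolding dlt_def by (auto simp: fun_eq_iff)
qed (auto simp: DS_group group_GF)

lemma blk_gad_dlt: "blk J (gad J g 0 (\<lambda>l. 0)) = dlt (set_encode J, 0) g"
proof
  fix q show "blk J (gad J g 0 (\<lambda>l. 0)) q = dlt (set_encode J, 0) g q"
    unfolding blk_def dlt_def by (cases q; cases "snd q") auto
qed

lemma conj_dlt:
  assumes l: "lg \<in> carrier DS" "lg q0 = x0"
  shows "lg [^]\<^bsub>DS\<^esub> (j::int) \<otimes>\<^bsub>DS\<^esub> dlt q0 a0 \<otimes>\<^bsub>DS\<^esub> inv\<^bsub>DS\<^esub> (lg [^]\<^bsub>DS\<^esub> j) = dlt q0 (aj j)"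
proof -
  define L where "L = lg [^]\<^bsub>DS\<^esub> j"
  have Lc: "L \<in> carrier DS" unfolding L_def using l(1) by simp
  have Lq: "L q = (lg q) [^]\<^bsub>GF\<^esub> j" for q unfolding L_def using DS_pow[OF l(1)] by simp
  show ?thesis unfolding L_def[symmetric]
  proof
    fix q
    show "(L \<otimes>\<^bsub>DS\<^esub> dlt q0 a0 \<otimes>\<^bsub>DS\<^esub> inv\<^bsub>DS\<^esub> L) q = dlt q0 (aj j) q"
    proof (cases "q = q0")
      case True
      have "L q0 = xp j" using Lq l(2) unfolding xp_def by simp
      then show ?thesis using True DS_inv[OF Lc] unfolding dlt_def aj_def by (simp add: xp_neg)
    next
      case False
      have "L q \<circ> finv (L q) = id" using finv_comp1 DS_carrierD[OF Lc] by blast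
      then show ?thesis using False DS_inv[OF Lc] unfolding dlt_def by simp
    qed
  qed
qed

definition cnd :: "nat set \<Rightarrow> nat \<Rightarrow> int \<Rightarrow> (nat \<Rightarrow> int) \<Rightarrow> bool" where
  "cnd J i k v \<longleftrightarrow> (i \<noteq> Max J \<longrightarrow> v i = 0) \<and> (i = Max J \<longrightarrow> k = (\<Sum>l\<in>J - {Max J}. v l))"

definition ind :: "nat \<Rightarrow> nat \<Rightarrow> int" where "ind l = (\<lambda>l'. if l' = l then 1 else 0)"


declare mult_sum_group[simp del] one_sum_group[simp del]

context
  fixes n :: nat and c :: "nat set \<Rightarrow> nat"
begin

definition Cs :: "nat set set" where "Cs = {J. J \<noteq> {} \<and> J \<subseteq> {1..n} \<and> c J = 1}"

definition R :: "nat set \<Rightarrow> nat set \<Rightarrow> (nat \<Rightarrow> real \<Rightarrow> real) \<Rightarrow> bool" where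
  "R I J \<psi> \<longleftrightarrow> (if J \<in> Cs \<and> I \<subseteq> J then (\<exists>b\<in>Bgrp. \<exists>k v. \<psi> = gad J b k v \<and> (\<forall>i\<in>I. cnd J i k v))
                 else \<psi> = (\<lambda>j. id))"

definition XI :: "nat set \<Rightarrow> (idx \<Rightarrow> real \<Rightarrow> real) set" where
  "XI I = {\<phi> \<in> carrier DS. \<forall>m. R I (set_decode m) (\<lambda>j. \<phi> (m, j))}"

lemma Cs_fin: "J \<in> Cs \<Longrightarrow> finite J"
  unfolding Cs_def using finite_subset by blast

lemma Cs_ne: "J \<in> Cs \<Longrightarrow> J \<noteq> {}" unfolding Cs_def by auto

lemma Cs_finite: "finite Cs"
proof -
  have "Cs \<subseteq> Pow {1..n}" unfolding Cs_def by auto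
  then show ?thesis using finite_subset by blast
qed

lemma id_Bgrp: "id \<in> Bgrp"
  using generate.one[of GF "range aj"] unfolding Bgrp_def by simp

lemma R_id: "R I J (\<lambda>j. id)"
proof (cases "J \<in> Cs \<and> I \<subseteq> J")
  case True
  have "cnd J i 0 (\<lambda>l. 0)" for i unfolding cnd_def by simp
  then have "\<exists>b\<in>Bgrp. \<exists>k v. (\<lambda>j. id) = gad J b k v \<and> (\<forall>i\<in>I. cnd J i k v)"
    using id_Bgrp gad_trivial[of J] by (intro bexI[of _ id] exI[of _ 0] exI[of _ "\<lambda>l. 0"]) auto
  then show ?thesis unfolding R_def using True by simp
next
  case False then show ?thesis unfolding R_def by auto
qed

lemma cnd_cong:
  assumes "i \<in> J" "\<forall>l\<in>J - {Max J}. v l = v' l" "cnd J i k v'"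
  shows "cnd J i k v"
  using assms unfolding cnd_def by (auto intro: sum.cong)

lemma R_inter:
  assumes "I \<noteq> {}"
  shows "(\<forall>i\<in>I. R {i} J \<psi>) \<longleftrightarrow> R I J \<psi>"
proof (cases "J \<in> Cs")
  case JC: True
  show ?thesis
  proof (cases "I \<subseteq> J")
    case True
    show ?thesis
    proof
      assume all: "\<forall>i\<in>I. R {i} J \<psi>"
      obtain i0 where i0: "i0 \<in> I" using assms by auto
      have "R {i0} J \<psi>" using all i0 by auto
      moreover have "i0 \<in> J" using True i0 by auto
      ultimately have "\<exists>b\<in>Bgrp. \<exists>k v. \<psi> = gad J b k v" using JC True i0 unfolding R_def by auto
      then obtain b k v where bkv: "b \<in> Bgrp" "\<psi> = gad J b k v" by auto
      have "cnd J i k v" if i: "i \<in> I" for i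
      proof -
        have "R {i} J \<psi>" using all i by auto
        moreover have "i \<in> J" using True i by auto
        ultimately have "\<exists>b'\<in>Bgrp. \<exists>k' v'. \<psi> = gad J b' k' v' \<and> cnd J i k' v'" using JC True i unfolding R_def by auto
        then obtain b' k' v' where "b' \<in> Bgrp" "\<psi> = gad J b' k' v'" "cnd J i k' v'" by auto
        then have "k = k'" "\<forall>l\<in>J - {Max J}. v l = v' l" "cnd J i k' v'" using gad_unique[OF bkv(1)] bkv(2) by auto
        then show ?thesis using cnd_cong[of i J v v' k] i True by auto
      qed
      then show "R I J \<psi>" unfolding R_def using JC True bkv by auto
    next
      assume r: "R I J \<psi>"
      show "\<forall>i\<in>I. R {i} J \<psi>"
      proof
        fix i assume i: "i \<in> I"
        obtain b k v where bkv: "b \<in> Bgrp" "\<psi> = gad J b k v" "\<forall>i\<in>I. cnd J i k v"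
          using r JC True unfolding R_def by auto
        have sub: "{i} \<subseteq> J" using i True by auto
        have "\<exists>b\<in>Bgrp. \<exists>k v. \<psi> = gad J b k v \<and> (\<forall>i'\<in>{i}. cnd J i' k v)" using bkv i by blast
        then show "R {i} J \<psi>" using JC sub unfolding R_def by simp
      qed
    qed
  next
    case False
    then obtain i0 where i0: "i0 \<in> I" "i0 \<notin> J" by auto
    show ?thesis
    proof
      assume "\<forall>i\<in>I. R {i} J \<psi>"
      then have "R {i0} J \<psi>" using i0 by auto
      then have "\<psi> = (\<lambda>j. id)" using i0 unfolding R_def by auto
      then show "R I J \<psi>" using R_id by simp
    next
      assume "R I J \<psi>"
      then have "\<psi> = (\<lambda>j. id)" using False unfolding R_def by auto
      then show "\<forall>i\<in>I. R {i} J \<psi>" using R_id by simp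
    qed
  qed
next
  case False
  then show ?thesis using assms unfolding R_def by auto
qed

lemma XI_inter: assumes "I \<noteq> {}" shows "(\<Inter>i\<in>I. XI {i}) = XI I"
proof -
  have "\<phi> \<in> (\<Inter>i\<in>I. XI {i}) \<longleftrightarrow> \<phi> \<in> XI I" for \<phi>
    using R_inter[OF assms] assms unfolding XI_def by auto
  then show ?thesis by blast
qed

lemma R_mult:
  assumes "R I J \<psi>" "R I J \<psi>'"
  shows "R I J (\<lambda>j. \<psi> j \<circ> \<psi>' j)"
proof (cases "J \<in> Cs \<and> I \<subseteq> J")
  case True
  obtain b k v where b: "b \<in> Bgrp" "\<psi> = gad J b k v" "\<forall>i\<in>I. cnd J i k v" using assms(1) True unfolding R_def by auto
  obtain b' k' v' where b': "b' \<in> Bgrp" "\<psi>' = gad J b' k' v'" "\<forall>i\<in>I. cnd J i k' v'" using assms(2) True unfolding R_def by auto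
  have e: "(\<lambda>j. \<psi> j \<circ> \<psi>' j) = gad J (b \<circ> cj k b') (k + k') (\<lambda>l. v l + v' l)"
    using gad_mult[OF B_Fset[OF b(1)] B_Fset[OF b'(1)]] b(2) b'(2) by simp
  have "b \<otimes>\<^bsub>GF\<^esub> cj k b' \<in> Bgrp" using subgroup.m_closed[OF B_subgroup b(1) cj_B[OF b'(1)]] .
  then have bb: "b \<circ> cj k b' \<in> Bgrp" by simp
  have "cnd J i (k + k') (\<lambda>l. v l + v' l)" if "i \<in> I" for i
    using b(3) b'(3) that unfolding cnd_def by (auto simp: sum.distrib)
  then show ?thesis unfolding R_def using True e bb by auto
next
  case False then show ?thesis using assms unfolding R_def by auto
qed

lemma R_inv:
  assumes "R I J \<psi>"
  shows "R I J (\<lambda>j. finv (\<psi> j))"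
proof (cases "J \<in> Cs \<and> I \<subseteq> J")
  case True
  obtain b k v where b: "b \<in> Bgrp" "\<psi> = gad J b k v" "\<forall>i\<in>I. cnd J i k v" using assms(1) True unfolding R_def by auto
  have e: "(\<lambda>j. finv (\<psi> j)) = gad J (cj (- k) (finv b)) (- k) (\<lambda>l. - v l)"
    using gad_inv[OF B_Fset[OF b(1)]] b(2) by simp
  have "inv\<^bsub>GF\<^esub> b \<in> Bgrp" using subgroup.m_inv_closed[OF B_subgroup b(1)] .
  then have "finv b \<in> Bgrp" using B_Fset[OF b(1)] by simp
  then have bb: "cj (- k) (finv b) \<in> Bgrp" by (rule cj_B)
  have "cnd J i (- k) (\<lambda>l. - v l)" if "i \<in> I" for i
    using b(3) that unfolding cnd_def by (auto simp: sum_negf)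
  then show ?thesis unfolding R_def using True e bb by auto
next
  case False then show ?thesis using assms unfolding R_def by (auto simp: finv_id)
qed

lemma XI_subgroup: "subgroup (XI I) DS"
proof
  show "XI I \<subseteq> carrier DS" unfolding XI_def by auto
  show "\<one>\<^bsub>DS\<^esub> \<in> XI I" using DSG.one_closed R_id unfolding XI_def by (auto simp: restrict_UNIV)
  fix x y assume x: "x \<in> XI I" and y: "y \<in> XI I"
  then have xy: "x \<otimes>\<^bsub>DS\<^esub> y \<in> carrier DS" unfolding XI_def using DSG.m_closed by auto
  show "x \<otimes>\<^bsub>DS\<^esub> y \<in> XI I" unfolding XI_def using xy x y R_mult unfolding XI_def by auto
next
  fix x assume x: "x \<in> XI I"
  then have xc: "x \<in> carrier DS" unfolding XI_def by auto
  have "inv\<^bsub>DS\<^esub> x \<in> carrier DS" by (rule DSG.inv_closed[OF xc])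
  then show "inv\<^bsub>DS\<^esub> x \<in> XI I" unfolding XI_def using x R_inv DS_inv[OF xc] unfolding XI_def by auto
qed

lemma blk_XI:
  assumes "finite J" "blk J \<psi> \<in> carrier DS" "R I J \<psi>"
  shows "blk J \<psi> \<in> XI I"
  unfolding XI_def
proof (intro CollectI conjI allI)
  show "blk J \<psi> \<in> carrier DS" by fact
  fix m
  show "R I (set_decode m) (\<lambda>j. blk J \<psi> (m, j))"
  proof (cases "m = set_encode J")
    case True then show ?thesis using assms(1,3) unfolding blk_def by simp
  next
    case False then show ?thesis using R_id unfolding blk_def by simp
  qed
qed

end


context
  fixes n :: nat and c :: "nat set \<Rightarrow> nat"
begin

lemma XI_not_fg:
  assumes IC: "I \<in> Cs n c"
  shows "\<not> fin_gen_subgroup DS (XI n c I)"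
proof
  assume "fin_gen_subgroup DS (XI n c I)"
  then obtain S where S: "finite S" "S \<subseteq> carrier DS" "XI n c I = generate DS S"
    unfolding fin_gen_subgroup_def by blast
  define q0 where "q0 = (set_encode I, 0::nat)"
  have If: "finite I" "I \<noteq> {}" using Cs_fin[OF IC] Cs_ne[OF IC] by auto
  have img: "(\<lambda>\<phi>. \<phi> q0) ` XI n c I = Bgrp"
  proof
    show "(\<lambda>\<phi>. \<phi> q0) ` XI n c I \<subseteq> Bgrp"
    proof
      fix y assume "y \<in> (\<lambda>\<phi>. \<phi> q0) ` XI n c I"
      then obtain \<phi> where \<phi>: "\<phi> \<in> XI n c I" "y = \<phi> q0" by auto
      have "R n c I (set_decode (set_encode I)) (\<lambda>j. \<phi> (set_encode I, j))" using \<phi>(1) unfolding XI_def by auto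
      then have "R n c I I (\<lambda>j. \<phi> (set_encode I, j))" using If by simp
      then obtain b k v where bkv: "b \<in> Bgrp" "(\<lambda>j. \<phi> (set_encode I, j)) = gad I b k v" "\<forall>i\<in>I. cnd I i k v"
        using IC unfolding R_def by auto
      have M: "Max I \<in> I" using If by simp
      have "k = (\<Sum>l\<in>I - {Max I}. v l)" using bkv(3) M unfolding cnd_def by auto
      also have "\<dots> = 0" using bkv(3) unfolding cnd_def by (intro sum.neutral) auto
      finally have "k = 0" .
      then have "y = b" using fun_cong[OF bkv(2), of 0] \<phi>(2) unfolding q0_def by simp
      then show "y \<in> Bgrp" using bkv(1) by simp
    qed
  next
    show "Bgrp \<subseteq> (\<lambda>\<phi>. \<phi> q0) ` XI n c I"
    proof
      fix b assume b: "b \<in> Bgrp"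
      have "\<exists>b'\<in>Bgrp. \<exists>k v. gad I b 0 (\<lambda>l. 0) = gad I b' k v \<and> (\<forall>i\<in>I. cnd I i k v)"
        by (rule bexI[of _ b], rule exI[of _ 0], rule exI[of _ "\<lambda>l. 0"]) (auto simp: cnd_def b)
      then have "R n c I I (gad I b 0 (\<lambda>l. 0))"
        unfolding R_def using IC by simp
      then have "blk I (gad I b 0 (\<lambda>l. 0)) \<in> XI n c I"
        by (intro blk_XI If(1) blk_gad_carrier B_Fset b)
      moreover have "blk I (gad I b 0 (\<lambda>l. 0)) q0 = b" unfolding blk_def q0_def by simp
      ultimately show "b \<in> (\<lambda>\<phi>. \<phi> q0) ` XI n c I"
        by (intro image_eqI[where x="blk I (gad I b 0 (\<lambda>l. 0))"]) simp_all
    qed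
  qed
  have "Bgrp = generate GF ((\<lambda>\<phi>. \<phi> q0) ` S)"
    using group_hom.generate_img[OF DS_eval_hom S(2)] img S(3) by simp
  moreover have "(\<lambda>\<phi>. \<phi> q0) ` S \<subseteq> carrier GF"
  proof (rule image_subsetI)
    fix \<phi> assume "\<phi> \<in> S"
    then have "\<phi> \<in> carrier DS" using S(2) by blast
    then show "\<phi> q0 \<in> carrier GF" using DS_carrierD[of \<phi> q0] by simp
  qed
  ultimately have "fin_gen_subgroup GF Bgrp" unfolding fin_gen_subgroup_def using S(1) by blast
  then show False using B_not_fg by simp
qed

lemma R_gadI:
  assumes "J \<in> Cs n c" "I \<subseteq> J" "b \<in> Bgrp" "\<forall>i\<in>I. cnd J i k v"
  shows "R n c I J (gad J b k v)"
proof -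
  have "\<exists>b'\<in>Bgrp. \<exists>k' v'. gad J b k v = gad J b' k' v' \<and> (\<forall>i\<in>I. cnd J i k' v')"
    using assms(3,4) by blast
  then show ?thesis unfolding R_def using assms(1,2) by simp
qed

lemma sum_ind: "finite A \<Longrightarrow> (\<Sum>l'\<in>A. ind l l') = (if l \<in> A then 1 else 0)"
  unfolding ind_def by (simp add: sum.delta)

lemma XI_fg:
  assumes I: "I \<noteq> {}" "I \<subseteq> {1..n}" "I \<notin> Cs n c"
  shows "fin_gen_subgroup DS (XI n c I)"
proof -
  define Ks where "Ks = {J \<in> Cs n c. I \<subseteq> J}"
  have Ksfin: "finite Ks" using Cs_finite[of n c] unfolding Ks_def by auto
  have KsD: "finite J \<and> J \<noteq> {} \<and> I \<subseteq> J \<and> J \<in> Cs n c \<and> J \<noteq> I" if "J \<in> Ks" for J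
    using that Cs_fin Cs_ne I(3) unfolding Ks_def by auto
  define w where "w J = (if Max J \<in> I then 1 else 0 :: int)" for J
  define gen where "gen J l = blk J (gad J id (w J) (ind l))" for J l
  define T0 where "T0 J = blk J (gad J id 1 (\<lambda>l. 0))" for J
  define SA where "SA J = blk J (gad J a0 0 (\<lambda>l. 0))" for J
  define S where "S = (\<Union>J\<in>Ks. insert (SA J) ((if Max J \<in> I then {} else {T0 J}) \<union> gen J ` (J - {Max J} - I)))"
  have Sfin: "finite S" unfolding S_def using Ksfin KsD by auto
  have a0B: "a0 \<in> Bgrp"
  proof -
    have "aj 0 = a0" unfolding aj_def by simp
    then show ?thesis using aj_B[of 0] by simp
  qed
  have idF: "id \<in> Fset" by (rule Fset_id)
  have SX: "S \<subseteq> XI n c I"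
  proof
    fix g assume "g \<in> S"
    then obtain J where J: "J \<in> Ks" "g \<in> insert (SA J) ((if Max J \<in> I then {} else {T0 J}) \<union> gen J ` (J - {Max J} - I))"
      unfolding S_def by blast
    have Jf: "finite J" "J \<noteq> {}" "I \<subseteq> J" "J \<in> Cs n c" using KsD[OF J(1)] by auto
    have M: "Max J \<in> J" using Jf by simp
    consider "g = SA J" | "Max J \<notin> I" "g = T0 J" | l where "l \<in> J - {Max J} - I" "g = gen J l"
      using J(2) by (auto split: if_splits)
    then show "g \<in> XI n c I"
    proof cases
      case 1
      have "R n c I J (gad J a0 0 (\<lambda>l. 0))" by (rule R_gadI[OF Jf(4) Jf(3) a0B]) (auto simp: cnd_def)
      then show ?thesis unfolding 1 SA_def using Jf by (intro blk_XI blk_gad_carrier a0_Fset)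
    next
      case 2
      have "R n c I J (gad J id 1 (\<lambda>l. 0))" by (rule R_gadI[OF Jf(4) Jf(3) id_Bgrp]) (use 2 in \<open>auto simp: cnd_def\<close>)
      then show ?thesis unfolding 2 T0_def using Jf by (intro blk_XI blk_gad_carrier idF)
    next
      case 3
      have "cnd J i (w J) (ind l)" if i: "i \<in> I" for i
      proof -
        have "i \<noteq> l" using i 3 by auto
        moreover have "i = Max J \<Longrightarrow> w J = (\<Sum>l'\<in>J - {Max J}. ind l l')"
          using i 3 Jf sum_ind[of "J - {Max J}" l] unfolding w_def by auto
        ultimately show ?thesis unfolding cnd_def ind_def by auto
      qed
      then have "R n c I J (gad J id (w J) (ind l))" by (intro R_gadI[OF Jf(4) Jf(3) id_Bgrp]) auto
      then show ?thesis unfolding 3 gen_def using Jf by (intro blk_XI blk_gad_carrier idF)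
    qed
  qed
  have Sc: "S \<subseteq> carrier DS" using SX unfolding XI_def by auto
  define Y where "Y = generate DS S"
  have Ysub: "subgroup Y DS" unfolding Y_def by (rule DSG.generate_is_subgroup[OF Sc])
  have SY: "S \<subseteq> Y" unfolding Y_def using generate.incl[of _ S DS] by blast
  have YX: "Y \<subseteq> XI n c I" unfolding Y_def by (rule DSG.generate_subgroup_incl[OF SX XI_subgroup])
  have Y1: "\<one>\<^bsub>DS\<^esub> \<in> Y" by (rule subgroup.one_closed[OF Ysub])
  have Ym: "x \<otimes>\<^bsub>DS\<^esub> y \<in> Y" if "x \<in> Y" "y \<in> Y" for x y using subgroup.m_closed[OF Ysub that] .
  have Yi: "inv\<^bsub>DS\<^esub> x \<in> Y" if "x \<in> Y" for x using subgroup.m_inv_closed[OF Ysub that] .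
  have Yp: "x [^]\<^bsub>DS\<^esub> (e::int) \<in> Y" if "x \<in> Y" for x e using DSG.subgroup_int_pow_closed[OF Ysub that] .
  have Bpart: "dlt (set_encode J, 0) b \<in> Y" if J: "J \<in> Ks" and b: "b \<in> Bgrp" for J b
  proof -
    have Jf: "finite J" "J \<noteq> {}" "I \<subseteq> J" "J \<in> Cs n c" "J \<noteq> I" using KsD[OF J] by auto
    obtain lg where lg: "lg \<in> Y" "lg \<in> carrier DS" "lg (set_encode J, 0) = x0"
    proof (cases "Max J \<in> I")
      case False
      have "T0 J \<in> S" unfolding S_def using J False by auto
      moreover have "T0 J (set_encode J, 0) = x0" unfolding T0_def blk_def by simp
      ultimately show ?thesis using that SY Sc by blast
    next
      case True
      obtain l0 where l0: "l0 \<in> J" "l0 \<notin> I" using Jf by blast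
      then have "l0 \<in> J - {Max J} - I" using True by auto
      then have "gen J l0 \<in> S" unfolding S_def using J by auto
      moreover have "gen J l0 (set_encode J, 0) = x0" unfolding gen_def blk_def w_def using True by simp
      ultimately show ?thesis using that SY Sc by blast
    qed
    have "dlt (set_encode J, 0) a0 = SA J" unfolding SA_def by (rule blk_gad_dlt[symmetric])
    moreover have "SA J \<in> S" unfolding S_def using J by auto
    ultimately have da: "dlt (set_encode J, 0) a0 \<in> Y" using SY by auto
    have "dlt (set_encode J, 0) (aj j) \<in> Y" for j
      using conj_dlt[OF lg(2,3), of j] Ym Yi Yp[OF lg(1)] da by metis
    then have "dlt (set_encode J, 0) ` range aj \<subseteq> Y" by auto
    then have "generate DS (dlt (set_encode J, 0) ` range aj) \<subseteq> Y"
      by (rule DSG.generate_subgroup_incl[OF _ Ysub])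
    moreover have "generate DS (dlt (set_encode J, 0) ` range aj) = dlt (set_encode J, 0) ` Bgrp"
      unfolding Bgrp_def by (rule group_hom.generate_img[OF dlt_hom range_aj_carrier])
    ultimately show ?thesis using b by auto
  qed
  have Tpart: "blk J (gad J id k v) \<in> Y" if J: "J \<in> Ks" and cv: "\<forall>i\<in>I. cnd J i k v" for J k v
  proof -
    have Jf: "finite J" "J \<noteq> {}" "I \<subseteq> J" "J \<in> Cs n c" "J \<noteq> I" using KsD[OF J] by auto
    define M where "M = Max J"
    define K where "K = J - {M} - I"
    have Kfin: "finite K" unfolding K_def using Jf by auto
    have peel: "K' \<subseteq> K \<longrightarrow> (\<forall>v. (\<forall>l\<in>J - {M} - K'. v l = 0) \<longrightarrow> blk J (gad J id (w J * (\<Sum>l\<in>K'. v l)) v) \<in> Y)"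
      if "finite K'" for K'
      using that
    proof (induction K' rule: finite_induct)
      case empty
      show ?case
      proof (intro impI allI)
        fix v :: "nat \<Rightarrow> int" assume "\<forall>l\<in>J - {M} - {}. v l = 0"
        then have "gad J id 0 v = (\<lambda>j. id)" using gad_zero_on[of J v] unfolding M_def by auto
        then show "blk J (gad J id (w J * (\<Sum>l\<in>{}. v l)) v) \<in> Y" using blk_trivial Y1 by simp
      qed
    next
      case (insert l K')
      show ?case
      proof (intro impI allI)
        fix v :: "nat \<Rightarrow> int"
        assume sub: "insert l K' \<subseteq> K" and vz: "\<forall>la\<in>J - {M} - insert l K'. v la = 0"
        define v' where "v' = v(l := 0)"
        have vz': "\<forall>la\<in>J - {M} - K'. v' la = 0" using vz unfolding v'_def by auto
        have sub': "K' \<subseteq> K" using sub by auto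
        have P': "blk J (gad J id (w J * (\<Sum>l\<in>K'. v' l)) v') \<in> Y"
          by (rule insert.IH[rule_format, OF sub']) (use vz' in auto)
        have lK: "l \<in> J - {M} - I" using sub unfolding K_def by auto
        then have "gen J l \<in> S" unfolding S_def using J unfolding M_def by auto
        then have g: "gen J l [^]\<^bsub>DS\<^esub> (v l) \<in> Y" using SY Yp by auto
        have gc: "gen J l \<in> carrier DS" unfolding gen_def using Jf by (intro blk_gad_carrier idF)
        have "gen J l [^]\<^bsub>DS\<^esub> (v l) = blk J (gad J id (w J * v l) (\<lambda>l'. ind l l' * v l))"
          using blk_pow[OF gc[unfolded gen_def]] gad_pow unfolding gen_def by simp
        then have "gen J l [^]\<^bsub>DS\<^esub> (v l) \<otimes>\<^bsub>DS\<^esub> blk J (gad J id (w J * (\<Sum>l\<in>K'. v' l)) v')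
            = blk J (gad J (id \<circ> cj (w J * v l) id) (w J * v l + w J * (\<Sum>l\<in>K'. v' l)) (\<lambda>l'. ind l l' * v l + v' l'))"
          using blk_mult gad_mult[OF idF idF] by simp
        also have "\<dots> = blk J (gad J id (w J * (\<Sum>l\<in>insert l K'. v l)) v)"
        proof -
          have "(\<Sum>l\<in>K'. v' l) = (\<Sum>l\<in>K'. v l)" unfolding v'_def using insert.hyps(2) by (intro sum.cong) auto
          moreover have "(\<Sum>l\<in>insert l K'. v l) = v l + (\<Sum>l\<in>K'. v l)" using insert.hyps by simp
          moreover have "(\<lambda>l'. ind l l' * v l + v' l') = v" unfolding v'_def ind_def by (auto simp: fun_eq_iff)
          ultimately show ?thesis by (simp add: cj_id algebra_simps)
        qed
        finally show "blk J (gad J id (w J * (\<Sum>l\<in>insert l K'. v l)) v) \<in> Y" using Ym[OF g P'] by simp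
      qed
    qed
    have vz: "\<forall>l\<in>J - {M} - K. v l = 0" using cv unfolding K_def M_def cnd_def by auto
    then have P: "blk J (gad J id (w J * (\<Sum>l\<in>K. v l)) v) \<in> Y" using peel[OF Kfin] by blast
    show ?thesis
    proof (cases "M \<in> I")
      case True
      have "k = (\<Sum>l\<in>J - {M}. v l)" using cv True unfolding cnd_def M_def by auto
      also have "\<dots> = (\<Sum>l\<in>K. v l)" using vz Jf by (intro sum.mono_neutral_right) (auto simp: K_def)
      finally show ?thesis using P True unfolding w_def M_def by simp
    next
      case False
      have P0: "blk J (gad J id 0 v) \<in> Y" using P False unfolding w_def M_def by simp
      have "T0 J \<in> S" unfolding S_def using J False unfolding M_def by auto
      then have t: "T0 J [^]\<^bsub>DS\<^esub> k \<in> Y" using SY Yp by auto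
      have tc: "T0 J \<in> carrier DS" unfolding T0_def using Jf by (intro blk_gad_carrier idF)
      have "T0 J [^]\<^bsub>DS\<^esub> k = blk J (gad J id (1 * k) (\<lambda>l. 0 * k))"
        using blk_pow[OF tc[unfolded T0_def]] gad_pow unfolding T0_def by simp
      then have "T0 J [^]\<^bsub>DS\<^esub> k \<otimes>\<^bsub>DS\<^esub> blk J (gad J id 0 v) = blk J (gad J (id \<circ> cj k id) (k + 0) (\<lambda>l. 0 + v l))"
        using blk_mult gad_mult[OF idF idF] by simp
      also have "\<dots> = blk J (gad J id k v)" by (simp add: cj_id)
      finally show ?thesis using Ym[OF t P0] by simp
    qed
  qed
  have Blkpart: "blk J (gad J b k v) \<in> Y" if J: "J \<in> Ks" and b: "b \<in> Bgrp" and cv: "\<forall>i\<in>I. cnd J i k v" for J b k v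
  proof -
    have "blk J (gad J b 0 (\<lambda>l. 0)) \<otimes>\<^bsub>DS\<^esub> blk J (gad J id k v) = blk J (gad J (b \<circ> cj 0 id) (0 + k) (\<lambda>l. 0 + v l))"
      using blk_mult gad_mult[OF B_Fset[OF b] idF] by simp
    also have "\<dots> = blk J (gad J b k v)" by (simp add: cj_id)
    finally show ?thesis using Ym[OF Bpart[OF J b, folded blk_gad_dlt] Tpart[OF J cv]] by simp
  qed
  have XY: "XI n c I \<subseteq> Y"
  proof
    fix \<phi> assume \<phi>: "\<phi> \<in> XI n c I"
    define rs where "rs K' = (\<lambda>q. if set_decode (fst q) \<in> K' then \<phi> q else id)" for K'
    have rsY: "K' \<subseteq> Ks \<longrightarrow> rs K' \<in> Y" if "finite K'" for K'
      using that
    proof (induction K' rule: finite_induct)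
      case empty
      have e: "rs {} = \<one>\<^bsub>DS\<^esub>" unfolding rs_def by (simp add: fun_eq_iff)
      show ?case using Y1 unfolding e[symmetric] by blast
    next
      case (insert J K')
      show ?case
      proof
        assume sub: "insert J K' \<subseteq> Ks"
        then have J: "J \<in> Ks" by auto
        have Jf: "finite J" "I \<subseteq> J" "J \<in> Cs n c" using KsD[OF J] by auto
        have "R n c I (set_decode (set_encode J)) (\<lambda>j. \<phi> (set_encode J, j))" using \<phi> unfolding XI_def by auto
        then have "R n c I J (\<lambda>j. \<phi> (set_encode J, j))" using Jf by simp
        then obtain b k v where bkv: "b \<in> Bgrp" "(\<lambda>j. \<phi> (set_encode J, j)) = gad J b k v" "\<forall>i\<in>I. cnd J i k v"
          using Jf unfolding R_def by auto
        have bl: "blk J (\<lambda>j. \<phi> (set_encode J, j)) \<in> Y" using Blkpart[OF J bkv(1) bkv(3)] bkv(2) by simp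
        have "rs (insert J K') = blk J (\<lambda>j. \<phi> (set_encode J, j)) \<otimes>\<^bsub>DS\<^esub> rs K'"
        proof
          fix q :: idx
          obtain m j where q: "q = (m, j)" by (cases q)
          show "rs (insert J K') q = (blk J (\<lambda>j. \<phi> (set_encode J, j)) \<otimes>\<^bsub>DS\<^esub> rs K') q"
          proof (cases "m = set_encode J")
            case True then show ?thesis unfolding rs_def blk_def q using Jf insert.hyps(2) by simp
          next
            case False
            then have "set_decode m \<noteq> J" using Jf by auto
            then show ?thesis unfolding rs_def blk_def q using False by simp
          qed
        qed
        then show "rs (insert J K') \<in> Y" using Ym[OF bl] insert.IH sub by simp
      qed
    qed
    have "\<phi> = rs Ks"
    proof
      fix q :: idx
      obtain m j where q: "q = (m, j)" by (cases q)
      show "\<phi> q = rs Ks q"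
      proof (cases "set_decode m \<in> Ks")
        case True then show ?thesis unfolding rs_def q by simp
      next
        case False
        have "R n c I (set_decode m) (\<lambda>j. \<phi> (m, j))" using \<phi> unfolding XI_def by auto
        then have "(\<lambda>j. \<phi> (m, j)) = (\<lambda>j. id)" using False unfolding R_def Ks_def by auto
        then show ?thesis unfolding rs_def q using False by (metis fst_conv)
      qed
    qed
    then show "\<phi> \<in> Y" using rsY[OF Ksfin] by simp
  qed
  have "XI n c I = generate DS S" using XY YX unfolding Y_def by blast
  then show ?thesis unfolding fin_gen_subgroup_def using Sfin Sc by blast
qed

lemma realisable_DS:
  assumes "configuration n c"
  shows "realisable DS n c"
  unfolding realisable_def
proof (intro exI[of _ "\<lambda>i. XI n c {i}"] conjI ballI allI impI)
  fix i show "subgroup (XI n c {i}) DS" by (rule XI_subgroup)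
next
  fix I assume I: "I \<noteq> {} \<and> I \<subseteq> {1..n}"
  have eq: "(\<Inter>i\<in>I. XI n c {i}) = XI n c I" using XI_inter I by blast
  have cI: "c I \<in> {0, 1}" using assms I unfolding configuration_def by blast
  show "fin_gen_subgroup DS (\<Inter>i\<in>I. XI n c {i}) \<longleftrightarrow> c I = 0"
  proof (cases "c I = 1")
    case True
    then have "I \<in> Cs n c" unfolding Cs_def using I by auto
    then show ?thesis using XI_not_fg eq True by simp
  next
    case False
    then have "I \<notin> Cs n c" "c I = 0" unfolding Cs_def using cI by auto
    then show ?thesis using XI_fg[of I] I eq by simp
  qed
qed

end

theorem GF_saturated: "intersection_saturated GF"
  unfolding intersection_saturated_def
  using realisable_inj_hom[OF glue_hom glue_inj_on realisable_DS] by blast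

theorem corollary3p1:
  shows "intersection_saturated (fun_group thompsonF) \<and>
         intersection_saturated (fun_group thompsonT) \<and>
         intersection_saturated (fun_group thompsonV)"
  using saturated_transfer[OF GF_saturated] .


end
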